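(* Let $V_0\le V$ be finite-dimensional vector spaces, $E=(E,q)$ a formed space and $U\in\mathcal{P}^\omega(E)$. The actions of $\operatorname{GL}(V)$ on $\mathcal{P}(V)$, of $A^T(V,V_0)$ on $\mathcal{P}(V,V_0)$, of $G(E)$ on $\mathcal{P}^\omega(E)$, and of $A(E,U)$ on $\mathcal{P}^\omega(E,U)$ are all transitive on the elements of any given dimension.
   Context: $\mathcal{P}(V)$ is the poset of subspaces $0<W<V$; $\mathcal{P}(V,V_0)$ the poset of $W<V$ with $W+V_0=V$; $A^T(V,V_0)=\{g\in\operatorname{GL}(V): g(v)-v\in V_0\ \forall v\}$. Formed spaces over a field with involution $\sigma$ ($\bar c=\sigma(c)$), $\varepsilon$ ($\varepsilon\bar\varepsilon=1$), $\Lambda$ ($\{c-\varepsilon\bar c\}\le\Lambda\le\{c:c+\varepsilon\bar c=0\}$): forms are sesquilinear maps modulo those $f$ with $f(v,v)\in\Lambda$, $f(w,v)=-\varepsilon\overline{f(v,w)}$; $\omega_q(v,w)=q(v,w)+\varepsilon\overline{q(w,v)}$, $Q_q(v)=q(v,v)+\Lambda$; radical $R(E)=\{v:\omega_q(E,v)=0,Q_q(v)=0\}$; $U^\perp=\{v:\omega_q(v,U)=0\}$; isotropic means $\omega_q,Q_q$ vanish. $\mathcal{P}^\omega(E)$: isotropic $W$ with $R(E)<W<E$; $\mathcal{P}^\omega(E,U)$: those with also $W+U^\perp=E$. $G(E)$ is the group of bijective isometries, $A(E,U)$ its subgroup fixing $U$ pointwise. *)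

theory Defs
  imports "HOL.Vector_Spaces"
begin

section \<open>Linear-algebra notions (V is the whole carrier type of a vector space)\<close>

definition fin_dim :: "('k::field \<Rightarrow> 'v::ab_group_add \<Rightarrow> 'v) \<Rightarrow> bool" where
  "fin_dim s \<longleftrightarrow> (\<exists>B. finite B \<and> module.span s B = UNIV)"

definition sum_space :: "'v::ab_group_add set \<Rightarrow> 'v set \<Rightarrow> 'v set" where
  "sum_space W W' = {w + w' | w w'. w \<in> W \<and> w' \<in> W'}"

definition GLgrp :: "('k::field \<Rightarrow> 'v::ab_group_add \<Rightarrow> 'v) \<Rightarrow> ('v \<Rightarrow> 'v) set" where
  "GLgrp s = {g. Vector_Spaces.linear s s g \<and> bij g}"

definition PV :: "('k::field \<Rightarrow> 'v::ab_group_add \<Rightarrow> 'v) \<Rightarrow> 'v set set" where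
  "PV s = {W. module.subspace s W \<and> {0} \<subset> W \<and> W \<subset> UNIV}"

definition PVrel :: "('k::field \<Rightarrow> 'v::ab_group_add \<Rightarrow> 'v) \<Rightarrow> 'v set \<Rightarrow> 'v set set" where
  "PVrel s V0 = {W. module.subspace s W \<and> W \<subset> UNIV \<and> sum_space W V0 = UNIV}"

definition AT :: "('k::field \<Rightarrow> 'v::ab_group_add \<Rightarrow> 'v) \<Rightarrow> 'v set \<Rightarrow> ('v \<Rightarrow> 'v) set" where
  "AT s V0 = {g \<in> GLgrp s. \<forall>v. g v - v \<in> V0}"

definition field_involution :: "('k::field \<Rightarrow> 'k) \<Rightarrow> bool" where
  "field_involution \<sigma> \<longleftrightarrow> (\<forall>a b. \<sigma> (a + b) = \<sigma> a + \<sigma> b) \<and> (\<forall>a b. \<sigma> (a * b) = \<sigma> a * \<sigma> b)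
     \<and> (\<forall>a. \<sigma> (\<sigma> a) = a)"

definition form_param :: "('k::field \<Rightarrow> 'k) \<Rightarrow> 'k \<Rightarrow> 'k set \<Rightarrow> bool" where
  "form_param \<sigma> \<epsilon> \<Lambda> \<longleftrightarrow> field_involution \<sigma> \<and> \<epsilon> * \<sigma> \<epsilon> = 1
     \<and> 0 \<in> \<Lambda> \<and> (\<forall>a\<in>\<Lambda>. \<forall>b\<in>\<Lambda>. a + b \<in> \<Lambda>) \<and> (\<forall>a\<in>\<Lambda>. - a \<in> \<Lambda>)
     \<and> {c - \<epsilon> * \<sigma> c | c. True} \<subseteq> \<Lambda> \<and> \<Lambda> \<subseteq> {c. c + \<epsilon> * \<sigma> c = 0}"

definition sesquilinear :: "('k::field \<Rightarrow> 'v::ab_group_add \<Rightarrow> 'v) \<Rightarrow> ('k \<Rightarrow> 'k) \<Rightarrow> ('v \<Rightarrow> 'v \<Rightarrow> 'k) \<Rightarrow> bool" where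
  "sesquilinear s \<sigma> q \<longleftrightarrow> (\<forall>u v w. q (u + v) w = q u w + q v w) \<and> (\<forall>u v w. q u (v + w) = q u v + q u w)
     \<and> (\<forall>a v w. q (s a v) w = \<sigma> a * q v w) \<and> (\<forall>a v w. q v (s a w) = q v w * a)"

text \<open>The sesquilinear maps that are identified with zero (forms are taken modulo these).\<close>
definition trivial_form :: "('k::field \<Rightarrow> 'v::ab_group_add \<Rightarrow> 'v) \<Rightarrow> ('k \<Rightarrow> 'k) \<Rightarrow> 'k \<Rightarrow> 'k set \<Rightarrow> ('v \<Rightarrow> 'v \<Rightarrow> 'k) \<Rightarrow> bool" where
  "trivial_form s \<sigma> \<epsilon> \<Lambda> f \<longleftrightarrow> sesquilinear s \<sigma> f \<and> (\<forall>v. f v v \<in> \<Lambda>)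
     \<and> (\<forall>v w. f w v = - (\<epsilon> * \<sigma> (f v w)))"

definition omega :: "('k::field \<Rightarrow> 'k) \<Rightarrow> 'k \<Rightarrow> ('v \<Rightarrow> 'v \<Rightarrow> 'k) \<Rightarrow> 'v \<Rightarrow> 'v \<Rightarrow> 'k" where
  "omega \<sigma> \<epsilon> q v w = q v w + \<epsilon> * \<sigma> (q w v)"

text \<open>Q_q(v) = q(v,v) + Lambda vanishes iff q(v,v) in Lambda.\<close>
definition radical :: "('k::field \<Rightarrow> 'k) \<Rightarrow> 'k \<Rightarrow> 'k set \<Rightarrow> ('v \<Rightarrow> 'v \<Rightarrow> 'k) \<Rightarrow> 'v set" where
  "radical \<sigma> \<epsilon> \<Lambda> q = {v. (\<forall>u. omega \<sigma> \<epsilon> q u v = 0) \<and> q v v \<in> \<Lambda>}"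

definition perp :: "('k::field \<Rightarrow> 'k) \<Rightarrow> 'k \<Rightarrow> ('v \<Rightarrow> 'v \<Rightarrow> 'k) \<Rightarrow> 'v set \<Rightarrow> 'v set" where
  "perp \<sigma> \<epsilon> q U = {v. \<forall>u\<in>U. omega \<sigma> \<epsilon> q v u = 0}"

definition isotropic :: "('k::field \<Rightarrow> 'k) \<Rightarrow> 'k \<Rightarrow> 'k set \<Rightarrow> ('v \<Rightarrow> 'v \<Rightarrow> 'k) \<Rightarrow> 'v set \<Rightarrow> bool" where
  "isotropic \<sigma> \<epsilon> \<Lambda> q W \<longleftrightarrow> (\<forall>v\<in>W. \<forall>w\<in>W. omega \<sigma> \<epsilon> q v w = 0) \<and> (\<forall>v\<in>W. q v v \<in> \<Lambda>)"

definition Pom :: "('k::field \<Rightarrow> 'v::ab_group_add \<Rightarrow> 'v) \<Rightarrow> ('k \<Rightarrow> 'k) \<Rightarrow> 'k \<Rightarrow> 'k set \<Rightarrow> ('v \<Rightarrow> 'v \<Rightarrow> 'k) \<Rightarrow> 'v set set" where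
  "Pom s \<sigma> \<epsilon> \<Lambda> q = {W. module.subspace s W \<and> isotropic \<sigma> \<epsilon> \<Lambda> q W
       \<and> radical \<sigma> \<epsilon> \<Lambda> q \<subset> W \<and> W \<subset> UNIV}"

definition Pom_rel :: "('k::field \<Rightarrow> 'v::ab_group_add \<Rightarrow> 'v) \<Rightarrow> ('k \<Rightarrow> 'k) \<Rightarrow> 'k \<Rightarrow> 'k set \<Rightarrow> ('v \<Rightarrow> 'v \<Rightarrow> 'k) \<Rightarrow> 'v set \<Rightarrow> 'v set set" where
  "Pom_rel s \<sigma> \<epsilon> \<Lambda> q U = {W \<in> Pom s \<sigma> \<epsilon> \<Lambda> q. sum_space W (perp \<sigma> \<epsilon> q U) = UNIV}"

text \<open>G(E): bijective linear maps g with [q(g-,g-)] = [q] as forms.\<close>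
definition isom_grp :: "('k::field \<Rightarrow> 'v::ab_group_add \<Rightarrow> 'v) \<Rightarrow> ('k \<Rightarrow> 'k) \<Rightarrow> 'k \<Rightarrow> 'k set \<Rightarrow> ('v \<Rightarrow> 'v \<Rightarrow> 'k) \<Rightarrow> ('v \<Rightarrow> 'v) set" where
  "isom_grp s \<sigma> \<epsilon> \<Lambda> q = {g. Vector_Spaces.linear s s g \<and> bij g
       \<and> trivial_form s \<sigma> \<epsilon> \<Lambda> (\<lambda>v w. q (g v) (g w) - q v w)}"

definition fix_grp :: "('k::field \<Rightarrow> 'v::ab_group_add \<Rightarrow> 'v) \<Rightarrow> ('k \<Rightarrow> 'k) \<Rightarrow> 'k \<Rightarrow> 'k set \<Rightarrow> ('v \<Rightarrow> 'v \<Rightarrow> 'k) \<Rightarrow> 'v set \<Rightarrow> ('v \<Rightarrow> 'v) set" where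
  "fix_grp s \<sigma> \<epsilon> \<Lambda> q U = {g \<in> isom_grp s \<sigma> \<epsilon> \<Lambda> q. \<forall>u\<in>U. g u = u}"

definition transitive_on_dims :: "('k::field \<Rightarrow> 'v::ab_group_add \<Rightarrow> 'v) \<Rightarrow> ('v \<Rightarrow> 'v) set \<Rightarrow> 'v set set \<Rightarrow> bool" where
  "transitive_on_dims s G X \<longleftrightarrow> (\<forall>W\<in>X. \<forall>W'\<in>X. vector_space.dim s W = vector_space.dim s W'
       \<longrightarrow> (\<exists>g\<in>G. g ` W = W'))"

end

theory Submission
  imports Defs
begin

locale fspace = finite_dimensional_vector_space s Basis
  for s :: "'k::field \<Rightarrow> 'e::ab_group_add \<Rightarrow> 'e" and Basis +
  fixes \<sigma> :: "'k \<Rightarrow> 'k" and \<epsilon> :: 'k and \<Lambda> :: "'k set" and q :: "'e \<Rightarrow> 'e \<Rightarrow> 'k"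
  assumes fp: "form_param \<sigma> \<epsilon> \<Lambda>" and sq: "sesquilinear s \<sigma> q"
begin

abbreviation om where "om \<equiv> omega \<sigma> \<epsilon> q"
abbreviation qq where "qq v \<equiv> q v v"

lemma fi: "field_involution \<sigma>"
  using fp unfolding form_param_def by (elim conjE)
lemma sig_add[simp]: "\<sigma> (a + b) = \<sigma> a + \<sigma> b"
  using fi unfolding field_involution_def by (elim conjE) (erule allE)+
lemma sig_mult[simp]: "\<sigma> (a * b) = \<sigma> a * \<sigma> b"
  using fi unfolding field_involution_def by (elim conjE) (erule allE)+
lemma sig_sig[simp]: "\<sigma> (\<sigma> a) = a"
  using fi unfolding field_involution_def by (elim conjE) (erule allE)+
lemma sig_0[simp]: "\<sigma> 0 = 0"
proof -
  have "\<sigma> 0 + \<sigma> 0 = \<sigma> 0 + 0" by (metis sig_add add_0_right)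
  then show ?thesis by (simp only: add_left_cancel)
qed
lemma sig_minus[simp]: "\<sigma> (- a) = - \<sigma> a"
  using sig_add[of a "-a"] by (simp add: eq_neg_iff_add_eq_0 add.commute)
lemma sig_diff[simp]: "\<sigma> (a - b) = \<sigma> a - \<sigma> b"
  using sig_add[of a "-b"] by simp
lemma sig_eq0[simp]: "\<sigma> a = 0 \<longleftrightarrow> a = 0"
  by (metis sig_0 sig_sig)
lemma sig_1[simp]: "\<sigma> 1 = 1"
proof -
  have nz: "\<sigma> 1 \<noteq> 0" by simp
  have "\<sigma> 1 * \<sigma> 1 = \<sigma> 1 * 1" by (metis sig_mult mult_1_right)
  then show ?thesis by (rule mult_left_cancel[OF nz, THEN iffD1])
qed
lemma sig_inverse[simp]: "\<sigma> (inverse a) = inverse (\<sigma> a)"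
proof (cases "a = 0")
  case False
  have "\<sigma> a * \<sigma> (inverse a) = \<sigma> (a * inverse a)" by (simp only: sig_mult)
  also have "\<dots> = 1" using False by simp
  finally show ?thesis by (rule inverse_unique[symmetric])
qed simp
lemma sig_divide[simp]: "\<sigma> (a / b) = \<sigma> a / \<sigma> b"
  by (simp add: divide_inverse)

lemma eps1: "\<epsilon> * \<sigma> \<epsilon> = 1"
  using fp unfolding form_param_def by (elim conjE)
lemma eps1': "\<sigma> \<epsilon> * \<epsilon> = 1"
  using eps1 by (simp add: mult.commute)
lemma eps_nz[simp]: "\<epsilon> \<noteq> 0"
  using eps1 by auto
lemma seps_nz[simp]: "\<sigma> \<epsilon> \<noteq> 0"
  using eps1 by auto

lemma fpl1: "0 \<in> \<Lambda>"
  using fp unfolding form_param_def by (elim conjE)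
lemma fpl2: "\<forall>a\<in>\<Lambda>. \<forall>b\<in>\<Lambda>. a + b \<in> \<Lambda>"
  using fp unfolding form_param_def by (elim conjE)
lemma fpl3: "\<forall>a\<in>\<Lambda>. - a \<in> \<Lambda>"
  using fp unfolding form_param_def by (elim conjE)
lemma fpl4: "{c - \<epsilon> * \<sigma> c | c. True} \<subseteq> \<Lambda>"
  using fp unfolding form_param_def by (elim conjE)
lemma fpl5: "\<Lambda> \<subseteq> {c. c + \<epsilon> * \<sigma> c = 0}"
  using fp unfolding form_param_def by (elim conjE)
lemmas fpl = fpl1 fpl2 fpl3 fpl4 fpl5
lemma lam0[simp]: "0 \<in> \<Lambda>"
  by (rule fpl(1))
lemma lam_add: "a \<in> \<Lambda> \<Longrightarrow> b \<in> \<Lambda> \<Longrightarrow> a + b \<in> \<Lambda>"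
  using fpl(2) by blast
lemma lam_uminus: "a \<in> \<Lambda> \<Longrightarrow> - a \<in> \<Lambda>"
  using fpl(3) by blast
lemma lam_diff: "a \<in> \<Lambda> \<Longrightarrow> b \<in> \<Lambda> \<Longrightarrow> a - b \<in> \<Lambda>"
  using lam_add[of a "-b"] lam_uminus[of b] by simp
lemma lam_min: "c - \<epsilon> * \<sigma> c \<in> \<Lambda>"
  using fpl(4) by blast
lemma lam_max: "a \<in> \<Lambda> \<Longrightarrow> a + \<epsilon> * \<sigma> a = 0"
  using fpl(5) by blast

lemma q_add1: "q (u + v) w = q u w + q v w"
  using sq unfolding sesquilinear_def by (elim conjE) (erule allE)+
lemma q_add2: "q u (v + w) = q u v + q u w"
  using sq unfolding sesquilinear_def by (elim conjE) (erule allE)+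
lemma q_s1: "q (s a v) w = \<sigma> a * q v w"
  using sq unfolding sesquilinear_def by (elim conjE) (erule allE)+
lemma q_s2: "q v (s a w) = q v w * a"
  using sq unfolding sesquilinear_def by (elim conjE) (erule allE)+
lemma q_01[simp]: "q 0 w = 0"
  using q_s1[of 0 w w] by simp
lemma q_02[simp]: "q w 0 = 0"
  using q_s2[of w 0 w] by simp
lemma q_minus1: "q (- u) w = - q u w"
  using q_add1[of u "-u" w] by (simp add: eq_neg_iff_add_eq_0 add.commute)
lemma q_minus2: "q w (- u) = - q w u"
  using q_add2[of w u "-u"] by (simp add: eq_neg_iff_add_eq_0 add.commute)
lemma q_diff1: "q (u - v) w = q u w - q v w"
  using q_add1[of u "-v" w] q_minus1 by simp
lemma q_diff2: "q w (u - v) = q w u - q w v"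
  using q_add2[of w u "-v"] q_minus2 by simp

lemmas q_lin = q_add1 q_add2 q_s1 q_s2 q_minus1 q_minus2 q_diff1 q_diff2

lemma om_def': "om v w = q v w + \<epsilon> * \<sigma> (q w v)"
  by (simp add: omega_def)

lemma om_add1: "om (u + v) w = om u w + om v w"
  by (simp add: omega_def q_lin algebra_simps)
lemma om_add2: "om w (u + v) = om w u + om w v"
  by (simp add: omega_def q_lin algebra_simps)
lemma om_s1: "om (s a v) w = \<sigma> a * om v w"
  by (simp add: omega_def q_lin algebra_simps)
lemma om_s2: "om v (s a w) = om v w * a"
  by (simp add: omega_def q_lin algebra_simps)
lemma om_01[simp]: "om 0 w = 0"
  by (simp add: omega_def)
lemma om_02[simp]: "om w 0 = 0"
  by (simp add: omega_def)
lemma om_minus1: "om (- u) w = - om u w"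
  by (simp add: omega_def q_lin algebra_simps)
lemma om_minus2: "om w (- u) = - om w u"
  by (simp add: omega_def q_lin algebra_simps)
lemma om_diff1: "om (u - v) w = om u w - om v w"
  by (simp add: omega_def q_lin algebra_simps)
lemma om_diff2: "om w (u - v) = om w u - om w v"
  by (simp add: omega_def q_lin algebra_simps)

lemmas om_lin = om_add1 om_add2 om_s1 om_s2 om_minus1 om_minus2 om_diff1 om_diff2

lemma om_sym: "om w v = \<epsilon> * \<sigma> (om v w)"
proof -
  have "\<epsilon> * \<sigma> (om v w) = \<epsilon> * \<sigma> (q v w) + (\<epsilon> * \<sigma> \<epsilon>) * q w v"
    by (simp add: omega_def algebra_simps)
  then show ?thesis by (simp add: eps1 omega_def)
qed

lemma om_zero_sym: "om v w = 0 \<longleftrightarrow> om w v = 0"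
  using om_sym[of v w] om_sym[of w v] by auto

lemma qq_add: "qq (u + v) - (qq u + qq v + om u v) \<in> \<Lambda>"
proof -
  have "qq (u + v) - (qq u + qq v + om u v) = q v u - \<epsilon> * \<sigma> (q v u)"
    by (simp add: q_lin omega_def algebra_simps)
  then show ?thesis using lam_min by simp
qed

lemma iso_om: "qq x \<in> \<Lambda> \<Longrightarrow> om x x = 0"
  using lam_max by (simp add: omega_def)

lemma qq_s: "qq (s a v) = \<sigma> a * qq v * a"
  by (simp add: q_lin)

end

context fspace begin

definition radw :: "'e set" where "radw = {v. \<forall>u. om u v = 0}"
definition isov :: "'e \<Rightarrow> bool" where "isov x \<longleftrightarrow> (\<forall>a. qq (s a x) \<in> \<Lambda>)"

lemma isov_om: "isov x \<Longrightarrow> om x x = 0"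
  unfolding isov_def using iso_om[of x] by (metis scale_one)

lemma om_span1:
  assumes "\<forall>t\<in>T. om t u = 0" "v \<in> span T"
  shows "om v u = 0"
  using assms(2)
proof (induct rule: span_induct)
  case base
  show ?case unfolding subspace_def by (simp add: om_add1 om_s1)
next
  case (step x) then show ?case using assms(1) by simp
qed

lemma om_span2:
  assumes "\<forall>t\<in>T. om u t = 0" "v \<in> span T"
  shows "om u v = 0"
  using assms(2)
proof (induct rule: span_induct)
  case base
  show ?case unfolding subspace_def by (simp add: om_add2 om_s2)
next
  case (step x) then show ?case using assms(1) by simp
qed

definition lfun :: "('e \<Rightarrow> 'k) \<Rightarrow> bool" where
  "lfun f \<longleftrightarrow> (\<forall>v w. f (v + w) = f v + f w) \<and> (\<forall>c v. f (s c v) = c * f v)"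

lemma lfun_om: "lfun (\<lambda>v. om x v)"
  unfolding lfun_def by (simp add: om_add2 om_s2 mult.commute)

lemma lfun_scal: "lfun f \<Longrightarrow> lfun (\<lambda>v. k * f v)"
  unfolding lfun_def by (simp add: algebra_simps)

lemma lfun_add: "lfun f \<Longrightarrow> lfun g \<Longrightarrow> lfun (\<lambda>v. f v + g v)"
  unfolding lfun_def by (simp add: algebra_simps)

lemma lfun_diff: "lfun f \<Longrightarrow> lfun g \<Longrightarrow> lfun (\<lambda>v. f v - g v)"
  unfolding lfun_def by (simp add: algebra_simps)

lemma lfun_uminus: "lfun f \<Longrightarrow> lfun (\<lambda>v. - f v)"
  unfolding lfun_def by (simp add: algebra_simps)

lemma vs: "vector_space s"
  by unfold_locales

lemma lfun_comp: "lfun f \<Longrightarrow> Vector_Spaces.linear s s g \<Longrightarrow> lfun (\<lambda>v. f (g v))"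
  unfolding lfun_def linear_iff by simp

lemma lin_comb:
  assumes "lfun f1" "lfun f2"
  shows "Vector_Spaces.linear s s (\<lambda>v. v + s (f1 v) x + s (f2 v) y)"
  unfolding linear_iff
proof (intro conjI allI)
  show "vector_space s" by (rule vs)
  show "vector_space s" by (rule vs)
  fix v w
  show "v + w + s (f1 (v + w)) x + s (f2 (v + w)) y =
        v + s (f1 v) x + s (f2 v) y + (w + s (f1 w) x + s (f2 w) y)"
    using assms unfolding lfun_def by (simp add: scale_left_distrib algebra_simps)
next
  fix c v
  show "s c v + s (f1 (s c v)) x + s (f2 (s c v)) y = s c (v + s (f1 v) x + s (f2 v) y)"
    using assms unfolding lfun_def by (simp add: scale_right_distrib)
qed

definition isoG :: "('e \<Rightarrow> 'e) \<Rightarrow> bool" where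
  "isoG g \<longleftrightarrow> Vector_Spaces.linear s s g \<and> bij g \<and> (\<forall>v w. om (g v) (g w) = om v w)
     \<and> (\<forall>v. qq (g v) - qq v \<in> \<Lambda>)"

lemma isoG_id: "isoG id"
  unfolding isoG_def by (simp add: vs linear_id)

lemma isoG_comp: "isoG g \<Longrightarrow> isoG h \<Longrightarrow> isoG (h \<circ> g)"
  unfolding isoG_def
proof (elim conjE, intro conjI allI)
  assume "Vector_Spaces.linear s s g" "Vector_Spaces.linear s s h"
  then show "Vector_Spaces.linear s s (h \<circ> g)" by (rule Vector_Spaces.linear_compose)
next
  assume "bij g" "bij h" then show "bij (h \<circ> g)" by (rule bij_comp)
next
  fix v w
  assume "\<forall>v w. om (g v) (g w) = om v w" "\<forall>v w. om (h v) (h w) = om v w"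
  then show "om ((h \<circ> g) v) ((h \<circ> g) w) = om v w" by simp
next
  fix v
  assume a: "\<forall>v. qq (g v) - qq v \<in> \<Lambda>" "\<forall>v. qq (h v) - qq v \<in> \<Lambda>"
  have "qq ((h \<circ> g) v) - qq v = (qq (h (g v)) - qq (g v)) + (qq (g v) - qq v)" by simp
  then show "qq ((h \<circ> g) v) - qq v \<in> \<Lambda>" using a lam_add by metis
qed

lemma isoG_mk:
  assumes lin: "Vector_Spaces.linear s s g"
    and omp: "\<And>v w. om (g v) (g w) = om v w"
    and qp: "\<And>v. qq (g v) - qq v \<in> \<Lambda>"
    and fx: "\<And>v. v \<in> radw \<Longrightarrow> g v = v"
  shows "isoG g"
proof -
  interpret lg: Vector_Spaces.linear s s g by (rule lin)
  have inj: "inj g"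
  proof (rule injI)
    fix a b assume "g a = g b"
    then have g0: "g (a - b) = 0" by (simp add: lg.diff)
    have "a - b \<in> radw" unfolding radw_def
    proof (intro CollectI allI)
      fix u show "om u (a - b) = 0" using omp[of u "a - b"] g0 by simp
    qed
    then have "a - b = 0" using fx g0 by force
    then show "a = b" by simp
  qed
  have "surj g" by (rule linear_inj_imp_surj[OF lin inj])
  with inj have "bij g" by (simp add: bij_def)
  then show ?thesis unfolding isoG_def using lin omp qp by blast
qed

lemma isoG_isom:
  assumes "isoG g" shows "g \<in> isom_grp s \<sigma> \<epsilon> \<Lambda> q"
proof -
  have lin: "Vector_Spaces.linear s s g" and bg: "bij g" and omp: "\<And>v w. om (g v) (g w) = om v w"
    and qp: "\<And>v. qq (g v) - qq v \<in> \<Lambda>" using assms unfolding isoG_def by blast+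
  interpret lg: Vector_Spaces.linear s s g by (rule lin)
  have ses: "sesquilinear s \<sigma> (\<lambda>v w. q (g v) (g w) - q v w)"
    unfolding sesquilinear_def
    by (simp add: lg.add lg.scale q_lin algebra_simps)
  have sym: "q (g w) (g v) - q w v = - (\<epsilon> * \<sigma> (q (g v) (g w) - q v w))" for v w
  proof -
    have "om (g w) (g v) = om w v" by (rule omp)
    then have "q (g w) (g v) + \<epsilon> * \<sigma> (q (g v) (g w)) = q w v + \<epsilon> * \<sigma> (q v w)"
      by (simp add: omega_def)
    then show ?thesis by (simp add: algebra_simps)
  qed
  show ?thesis unfolding isom_grp_def trivial_form_def
    using lin bg ses qp sym by blast
qed

end

context fspace begin

lemma block_om:
  assumes xx: "om x x = 0" and yy: "om y y = 0"
    and xc: "om x c = 0" and yc: "om y c = 0" and xc': "om x c' = 0" and yc': "om y c' = 0"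
  shows "om (c + s a x + s b y) (c' + s a' x + s b' y) = om c c' + \<sigma> a * b' * om x y + \<sigma> b * a' * om y x"
proof -
  have cx: "om c x = 0" and cy: "om c y = 0" using xc yc om_zero_sym by blast+
  show ?thesis
    by (simp add: om_add1 om_add2 om_s1 om_s2 xx yy xc yc xc' yc' cx cy algebra_simps)
qed

lemma block_qq:
  assumes ax: "qq (s a x) \<in> \<Lambda>" and by': "qq (s b y) \<in> \<Lambda>"
    and xc: "om x c = 0" and yc: "om y c = 0"
  shows "qq (c + s a x + s b y) - (qq c + \<sigma> a * b * om x y) \<in> \<Lambda>"
proof -
  have cx: "om c x = 0" using xc om_zero_sym by blast
  have cy: "om c y = 0" using yc om_zero_sym by blast
  define A where "A = qq (c + s a x + s b y) - (qq (c + s a x) + qq (s b y) + om (c + s a x) (s b y))"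
  define B where "B = qq (c + s a x) - (qq c + qq (s a x) + om c (s a x))"
  have A: "A \<in> \<Lambda>" unfolding A_def by (rule qq_add)
  have B: "B \<in> \<Lambda>" unfolding B_def by (rule qq_add)
  have e1: "om (c + s a x) (s b y) = \<sigma> a * b * om x y"
    by (simp add: om_add1 om_s1 om_s2 cy)
  have e2: "om c (s a x) = 0" by (simp add: om_s2 cx)
  have "qq (c + s a x + s b y) - (qq c + \<sigma> a * b * om x y) = A + B + qq (s a x) + qq (s b y)"
    unfolding A_def B_def e1 e2 by (simp add: algebra_simps)
  then show ?thesis using A B ax by' lam_add by metis
qed

definition swapm :: "'e \<Rightarrow> 'e \<Rightarrow> 'e \<Rightarrow> 'e" where
  "swapm x y v = v + s (om x v * \<sigma> \<epsilon> - \<sigma> \<epsilon> * om y v) x + s (\<sigma> \<epsilon> * om y v - om x v) y"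

lemma swap_lemma:
  assumes ix: "isov x" and iy: "isov y" and xy: "om x y = 1"
  shows "isoG (swapm x y) \<and> swapm x y x = y \<and> (\<forall>v. om x v = 0 \<and> om y v = 0 \<longrightarrow> swapm x y v = v)"
proof -
  have xx: "om x x = 0" and yy: "om y y = 0" using ix iy isov_om by blast+
  have yx: "om y x = \<epsilon>" using om_sym[of y x] xy by simp
  define a where "a v = \<sigma> \<epsilon> * om y v" for v
  define b where "b v = om x v" for v
  define c where "c v = v - s (a v) x - s (b v) y" for v
  have dec1: "v = c v + s (a v) x + s (b v) y" for v unfolding c_def by simp
  have dec2: "swapm x y v = c v + s (b v * \<sigma> \<epsilon>) x + s (a v) y" for v
    unfolding swapm_def c_def a_def b_def by (simp add: algebra_simps scale_left_diff_distrib)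
  have xc: "om x (c v) = 0" for v
    unfolding c_def a_def b_def by (simp add: om_diff2 om_s2 xx xy)
  have yc: "om y (c v) = 0" for v
    unfolding c_def a_def b_def by (simp add: om_diff2 om_s2 yy yx mult.assoc[symmetric] eps1' eps1)
  have lin: "Vector_Spaces.linear s s (swapm x y)"
  proof -
    have "lfun (\<lambda>v. om x v * \<sigma> \<epsilon> - \<sigma> \<epsilon> * om y v)"
      using lfun_diff[OF lfun_scal[OF lfun_om, of "\<sigma> \<epsilon>" x] lfun_scal[OF lfun_om, of "\<sigma> \<epsilon>" y]]
      by (simp add: mult.commute)
    moreover have "lfun (\<lambda>v. \<sigma> \<epsilon> * om y v - om x v)"
      by (rule lfun_diff[OF lfun_scal[OF lfun_om] lfun_om])
    ultimately show ?thesis unfolding swapm_def[abs_def] by (rule lin_comb)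
  qed
  have omp: "om (swapm x y v) (swapm x y w) = om v w" for v w
  proof -
    have "om (swapm x y v) (swapm x y w) = om (c v) (c w) + \<sigma> (b v * \<sigma> \<epsilon>) * a w * om x y
          + \<sigma> (a v) * (b w * \<sigma> \<epsilon>) * om y x"
      unfolding dec2 by (rule block_om[OF xx yy xc yc xc yc])
    also have "\<dots> = om (c v) (c w) + \<sigma> (b v) * \<epsilon> * a w + \<sigma> (a v) * b w"
      using xy yx eps1' by (simp add: algebra_simps)
    also have "\<dots> = om (c v) (c w) + \<sigma> (a v) * b w * om x y + \<sigma> (b v) * a w * om y x"
      using xy yx by (simp add: algebra_simps)
    also have "\<dots> = om v w"
      using block_om[where c="c v" and c'="c w" and a="a v" and b="b v" and a'="a w" and b'="b w", OF xx yy xc yc xc yc] dec1[of v] dec1[of w] by simp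
    finally show ?thesis .
  qed
  have qp: "qq (swapm x y v) - qq v \<in> \<Lambda>" for v
  proof -
    have ax: "qq (s \<alpha> x) \<in> \<Lambda>" for \<alpha> using ix unfolding isov_def by blast
    have ay: "qq (s \<alpha> y) \<in> \<Lambda>" for \<alpha> using iy unfolding isov_def by blast
    have A: "qq (swapm x y v) - (qq (c v) + \<sigma> (b v * \<sigma> \<epsilon>) * a v * om x y) \<in> \<Lambda>"
      unfolding dec2 by (rule block_qq[OF ax ay xc yc])
    have B: "qq v - (qq (c v) + \<sigma> (a v) * b v * om x y) \<in> \<Lambda>"
      using block_qq[where c="c v" and a="a v" and b="b v", OF ax ay xc yc] dec1[of v] by simp
    have C: "\<sigma> (a v) * b v - \<epsilon> * \<sigma> (\<sigma> (a v) * b v) \<in> \<Lambda>" by (rule lam_min)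
    have "qq (swapm x y v) - qq v = (qq (swapm x y v) - (qq (c v) + \<sigma> (b v * \<sigma> \<epsilon>) * a v * om x y))
       - (qq v - (qq (c v) + \<sigma> (a v) * b v * om x y)) - (\<sigma> (a v) * b v - \<epsilon> * \<sigma> (\<sigma> (a v) * b v))"
      using xy by (simp add: algebra_simps)
    then show ?thesis using A B C lam_diff by metis
  qed
  have fx: "swapm x y v = v" if "om x v = 0" "om y v = 0" for v
    unfolding swapm_def using that by simp
  have iso: "isoG (swapm x y)"
  proof (rule isoG_mk[OF lin omp qp])
    fix v assume "v \<in> radw"
    then have "om x v = 0" "om y v = 0" unfolding radw_def by blast+
    then show "swapm x y v = v" by (rule fx)
  qed
  have sx: "swapm x y x = y"
    unfolding swapm_def using xx yx eps1' by (simp add: mult.commute)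
  show ?thesis using iso sx fx by blast
qed

end

context fspace begin

lemma sp_lemma:
  assumes iu: "isov u" and iw: "isov w" and iw': "isov w'" and uw: "om u w = 1" and uw': "om u w' = 1"
  shows "\<exists>g. isoG g \<and> g u = u \<and> g w = w' \<and> (\<forall>v. om u v = 0 \<and> om w v = 0 \<and> om w' v = 0 \<longrightarrow> g v = v)"
proof -
  have uu: "om u u = 0" and ww: "om w w = 0" and ww': "om w' w' = 0" using iu iw iw' isov_om by blast+
  have wu: "om w u = \<epsilon>" using om_sym[of w u] uw by simp
  have w'u: "om w' u = \<epsilon>" using om_sym[of w' u] uw' by simp
  define al where "al v = \<sigma> \<epsilon> * om w v" for v
  define be where "be v = om u v" for v
  define c where "c v = v + s (- al v) u + s (- be v) w" for v
  define ga where "ga v = \<sigma> \<epsilon> * om w' (c v)" for v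
  define g where "g v = v + s (be v) (w' - w) + s (- ga v) u" for v
  have lfal: "lfun al" unfolding al_def[abs_def] by (rule lfun_scal[OF lfun_om])
  have lfbe: "lfun be" unfolding be_def[abs_def] by (rule lfun_om)
  have linc: "Vector_Spaces.linear s s c"
    unfolding c_def[abs_def] by (rule lin_comb[OF lfun_uminus[OF lfal] lfun_uminus[OF lfbe]])
  have lfga: "lfun ga" unfolding ga_def[abs_def]
    by (rule lfun_scal[OF lfun_comp[OF lfun_om linc]])
  have lin: "Vector_Spaces.linear s s g"
    unfolding g_def[abs_def] by (rule lin_comb[OF lfbe lfun_uminus[OF lfga]])
  define p where "p v = c v + s (- ga v) u" for v
  have dec1: "v = c v + s (al v) u + s (be v) w" for v unfolding c_def by simp
  have dec2: "g v = p v + s (al v) u + s (be v) w'" for v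
    unfolding g_def p_def c_def by (simp add: algebra_simps)
  have uc: "om u (c v) = 0" for v
    unfolding c_def al_def be_def by (simp add: om_add2 om_diff2 om_s2 uu uw)
  have wc: "om w (c v) = 0" for v
    unfolding c_def al_def be_def by (simp add: om_add2 om_diff2 om_s2 ww wu mult.assoc[symmetric] eps1' eps1)
  have up: "om u (p v) = 0" for v
    unfolding p_def by (simp add: om_add2 om_diff2 om_s2 uu uc)
  have w'p: "om w' (p v) = 0" for v
    unfolding p_def ga_def by (simp add: om_add2 om_diff2 om_s2 w'u mult.assoc[symmetric] eps1' eps1)
  have pp: "om (p v) (p v') = om (c v) (c v')" for v v'
  proof -
    have cu: "om (c v) u = 0" using uc om_zero_sym by blast
    show ?thesis unfolding p_def by (simp add: om_add1 om_add2 om_diff1 om_diff2 om_s1 om_s2 uu uc cu)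
  qed
  have omp: "om (g v) (g v') = om v v'" for v v'
  proof -
    have "om (g v) (g v') = om (p v) (p v') + \<sigma> (al v) * be v' * om u w' + \<sigma> (be v) * al v' * om w' u"
      unfolding dec2 by (rule block_om[OF uu ww' up w'p up w'p])
    also have "\<dots> = om (c v) (c v') + \<sigma> (al v) * be v' * om u w + \<sigma> (be v) * al v' * om w u"
      using pp uw uw' wu w'u by simp
    also have "\<dots> = om v v'"
      using block_om[where c="c v" and c'="c v'" and a="al v" and b="be v" and a'="al v'" and b'="be v'",
          OF uu ww uc wc uc wc] dec1[of v] dec1[of v'] by simp
    finally show ?thesis .
  qed
  have au: "qq (s a u) \<in> \<Lambda>" for a using iu unfolding isov_def by blast
  have aw: "qq (s a w) \<in> \<Lambda>" for a using iw unfolding isov_def by blast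
  have aw': "qq (s a w') \<in> \<Lambda>" for a using iw' unfolding isov_def by blast
  have qp: "qq (g v) - qq v \<in> \<Lambda>" for v
  proof -
    have A: "qq (g v) - (qq (p v) + \<sigma> (al v) * be v * om u w') \<in> \<Lambda>"
      unfolding dec2 by (rule block_qq[OF au aw' up w'p])
    have B: "qq v - (qq (c v) + \<sigma> (al v) * be v * om u w) \<in> \<Lambda>"
      using block_qq[where c="c v" and a="al v" and b="be v", OF au aw uc wc] dec1[of v] by simp
    have C: "qq (p v) - (qq (c v) + qq (s (- ga v) u) + om (c v) (s (- ga v) u)) \<in> \<Lambda>"
      unfolding p_def by (rule qq_add)
    have cu: "om (c v) u = 0" using uc om_zero_sym by blast
    have C': "qq (p v) - qq (c v) - qq (s (- ga v) u) \<in> \<Lambda>"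
      using C by (simp add: om_s2 om_minus2 cu diff_diff_eq)
    have "qq (g v) - qq v = (qq (g v) - (qq (p v) + \<sigma> (al v) * be v * om u w'))
        - (qq v - (qq (c v) + \<sigma> (al v) * be v * om u w)) + (qq (p v) - qq (c v) - qq (s (- ga v) u))
        + qq (s (- ga v) u)"
      using uw uw' by (simp add: algebra_simps)
    then show ?thesis using A B C' au[of "- ga v"] lam_diff lam_add by metis
  qed
  have fx: "g v = v" if "om u v = 0" "om w v = 0" "om w' v = 0" for v
  proof -
    have "c v = v" unfolding c_def al_def be_def using that by simp
    then show ?thesis unfolding g_def ga_def be_def using that by simp
  qed
  have iso: "isoG g"
  proof (rule isoG_mk[OF lin omp qp])
    fix v assume "v \<in> radw"
    then have "om u v = 0" "om w v = 0" "om w' v = 0" unfolding radw_def by blast+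
    then show "g v = v" by (rule fx)
  qed
  have gu: "g u = u"
  proof -
    have "c u = 0" unfolding c_def al_def be_def using wu uu eps1' by simp
    then show ?thesis unfolding g_def ga_def be_def using uu by simp
  qed
  have gw: "g w = w'"
  proof -
    have "c w = 0" unfolding c_def al_def be_def using ww uw by simp
    then show ?thesis unfolding g_def ga_def be_def using uw by simp
  qed
  show ?thesis using iso gu gw fx by blast
qed

end

context fspace begin

lemma perp_lemma:
  assumes "finite S"
  shows "(\<forall>u. (\<forall>t\<in>S. om t u = 0) \<longrightarrow> om x u = 0) \<Longrightarrow> \<exists>t\<in>span S. \<forall>u. om (x - t) u = 0"
  using assms
proof (induction S arbitrary: x rule: finite_induct)
  case empty
  then show ?case by (intro bexI[of _ 0]) (auto simp: span_zero)
next
  case (insert i S)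
  show ?case
  proof (cases "\<forall>u. (\<forall>t\<in>S. om t u = 0) \<longrightarrow> om i u = 0")
    case True
    then have "\<forall>u. (\<forall>t\<in>S. om t u = 0) \<longrightarrow> om x u = 0" using insert.prems by auto
    then obtain t where "t \<in> span S" "\<forall>u. om (x - t) u = 0" using insert.IH by blast
    moreover have "span S \<subseteq> span (insert i S)" by (rule span_mono) auto
    ultimately show ?thesis by blast
  next
    case False
    then obtain u0 where u0: "\<forall>t\<in>S. om t u0 = 0" "om i u0 \<noteq> 0" by blast
    define u1 where "u1 = s (inverse (om i u0)) u0"
    have iu1: "om i u1 = 1" unfolding u1_def using u0 by (simp add: om_s2)
    have tu1: "\<forall>t\<in>S. om t u1 = 0" unfolding u1_def using u0 by (simp add: om_s2)
    define x' where "x' = x - s (\<sigma> (om x u1)) i"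
    have "\<forall>u. (\<forall>t\<in>S. om t u = 0) \<longrightarrow> om x' u = 0"
    proof (intro allI impI)
      fix u assume tu: "\<forall>t\<in>S. om t u = 0"
      define u' where "u' = u - s (om i u) u1"
      have "\<forall>t\<in>insert i S. om t u' = 0"
        unfolding u'_def using tu tu1 iu1 by (simp add: om_diff2 om_s2)
      then have "om x u' = 0" using insert.prems by blast
      then have "om x u = om x u1 * om i u" unfolding u'_def by (simp add: om_diff2 om_s2)
      then show "om x' u = 0" unfolding x'_def by (simp add: om_diff1 om_s1)
    qed
    then obtain t' where t': "t' \<in> span S" "\<forall>u. om (x' - t') u = 0" using insert.IH by blast
    define t where "t = t' + s (\<sigma> (om x u1)) i"
    have "t \<in> span (insert i S)" unfolding t_def
      by (meson insertI1 span_add span_base span_mono span_scale subset_insertI subsetD t'(1))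
    moreover have "x - t = x' - t'" unfolding t_def x'_def by (simp add: algebra_simps)
    ultimately show ?thesis using t'(2) by metis
  qed
qed

end

context fspace begin

abbreviation iso where "iso W \<equiv> isotropic \<sigma> \<epsilon> \<Lambda> q W"
abbreviation perpS where "perpS T \<equiv> perp \<sigma> \<epsilon> q T"

lemma lin_span_image:
  assumes "Vector_Spaces.linear s s g" shows "g ` span A = span (g ` A)"
proof -
  interpret lg: Vector_Spaces.linear s s g by fact
  show ?thesis using lg.span_image[of A] by simp
qed

lemma span_insert_scale:
  assumes "k \<noteq> 0" shows "span (insert (s k y) I) = span (insert y I)"
proof -
  have "y = s (inverse k) (s k y)" using assms by simp
  then have "y \<in> span (insert (s k y) I)" by (metis insertI1 span_base span_scale)
  moreover have "s k y \<in> span (insert y I)" by (simp add: span_base span_scale)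
  ultimately show ?thesis unfolding span_eq
    by (meson dual_order.trans insert_subset span_superset subset_insertI)
qed

lemma iso_isov: "iso W \<Longrightarrow> subspace W \<Longrightarrow> x \<in> W \<Longrightarrow> isov x"
  unfolding isotropic_def isov_def by (simp add: subspace_scale)

lemma iso_span_insert:
  assumes sI: "subspace I" and iI: "iso I" and yI: "\<forall>i\<in>I. om y i = 0" and iy: "isov y"
  shows "iso (span (insert y I))"
proof -
  have yy: "om y y = 0" using iy isov_om by blast
  have rep: "\<exists>i a. i \<in> I \<and> v = i + s a y" if vv: "v \<in> span (insert y I)" for v
  proof -
    obtain k where "v - s k y \<in> span I" using vv span_breakdown_eq by blast
    moreover have "span I = I" using sI by simp
    ultimately have "v - s k y \<in> I" by simp
    then show ?thesis by (intro exI[of _ "v - s k y"] exI[of _ k]) simp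
  qed
  have iy': "om i y = 0" if "i \<in> I" for i using yI that om_zero_sym by blast
  have ii: "om i i' = 0" if "i \<in> I" "i' \<in> I" for i i' using iI that unfolding isotropic_def by blast
  have qi: "qq i \<in> \<Lambda>" if "i \<in> I" for i using iI that unfolding isotropic_def by blast
  show ?thesis unfolding isotropic_def
  proof (intro conjI ballI)
    fix v w assume "v \<in> span (insert y I)" "w \<in> span (insert y I)"
    then obtain i a i' b where "i \<in> I" "v = i + s a y" "i' \<in> I" "w = i' + s b y" using rep by metis
    then show "om v w = 0" using ii iy' yI yy by (simp add: om_add1 om_add2 om_s1 om_s2)
  next
    fix v assume "v \<in> span (insert y I)"
    then obtain i a where ia: "i \<in> I" "v = i + s a y" using rep by metis
    have "qq (i + s a y) - (qq i + qq (s a y) + om i (s a y)) \<in> \<Lambda>" by (rule qq_add)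
    then have "qq (i + s a y) - (qq i + qq (s a y)) \<in> \<Lambda>" using iy' ia by (simp add: om_s2)
    moreover have "qq i + qq (s a y) \<in> \<Lambda>" using qi ia iy unfolding isov_def by (simp add: lam_add)
    ultimately have "qq (i + s a y) - (qq i + qq (s a y)) + (qq i + qq (s a y)) \<in> \<Lambda>" by (rule lam_add)
    then show "qq v \<in> \<Lambda>" using ia by simp
  qed
qed

lemma swap_image:
  assumes ix: "isov x" and iy: "isov y" and xy: "om x y \<noteq> 0"
    and xI: "\<forall>i\<in>I. om x i = 0" and yI: "\<forall>i\<in>I. om y i = 0"
    and xS: "\<forall>t\<in>S. om x t = 0" and yS: "\<forall>t\<in>S. om y t = 0"
  shows "\<exists>g. isoG g \<and> (\<forall>v\<in>S. g v = v) \<and> (\<forall>v\<in>I. g v = v) \<and> g ` span (insert x I) = span (insert y I)"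
proof -
  define k where "k = inverse (om x y)"
  have k0: "k \<noteq> 0" unfolding k_def using xy by simp
  define y' where "y' = s k y"
  have iy': "isov y'" using iy unfolding isov_def y'_def by simp
  have xy': "om x y' = 1" unfolding y'_def k_def using xy by (simp add: om_s2)
  obtain g where g: "isoG g" "g x = y'" "\<forall>v. om x v = 0 \<and> om y' v = 0 \<longrightarrow> g v = v"
    using swap_lemma[OF ix iy' xy'] by blast
  have fS: "\<forall>v\<in>S. g v = v" using g(3) xS yS unfolding y'_def by (simp add: om_s1)
  have fI: "\<forall>v\<in>I. g v = v" using g(3) xI yI unfolding y'_def by (simp add: om_s1)
  have lin: "Vector_Spaces.linear s s g" using g(1) unfolding isoG_def by blast
  have "g ` insert x I = insert y' I" using g(2) fI by force
  then have "g ` span (insert x I) = span (insert y' I)" using lin_span_image[OF lin] by simp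
  also have "\<dots> = span (insert y I)" unfolding y'_def by (rule span_insert_scale[OF k0])
  finally show ?thesis using g(1) fS fI by blast
qed

lemma move_lemma:
  assumes ix: "isov x" and iy: "isov y"
    and xI: "\<forall>i\<in>I. om x i = 0" and yI: "\<forall>i\<in>I. om y i = 0"
    and xS: "\<forall>t\<in>S. om x t = 0" and yS: "\<forall>t\<in>S. om y t = 0"
    and NX: "\<exists>u. (\<forall>i\<in>I. om i u = 0) \<and> (\<forall>t\<in>S. om t u = 0) \<and> om x u \<noteq> 0"
    and NY: "\<exists>u. (\<forall>i\<in>I. om i u = 0) \<and> (\<forall>t\<in>S. om t u = 0) \<and> om y u \<noteq> 0"
  shows "\<exists>g. isoG g \<and> (\<forall>v\<in>S. g v = v) \<and> (\<forall>v\<in>I. g v = v) \<and> g ` span (insert x I) = span (insert y I)"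
proof (cases "om x y = 0")
  case False
  then show ?thesis using swap_image[OF ix iy False xI yI xS yS] by blast
next
  case True
  have yx: "om y x = 0" using True om_zero_sym by blast
  have xx: "om x x = 0" using ix isov_om by blast
  obtain u1 where u1: "\<forall>i\<in>I. om i u1 = 0" "\<forall>t\<in>S. om t u1 = 0" "om x u1 \<noteq> 0" using NX by blast
  obtain u2 where u2: "\<forall>i\<in>I. om i u2 = 0" "\<forall>t\<in>S. om t u2 = 0" "om y u2 \<noteq> 0" using NY by blast
  obtain u3 where u3: "\<forall>i\<in>I. om i u3 = 0" "\<forall>t\<in>S. om t u3 = 0" "om x u3 \<noteq> 0" "om y u3 \<noteq> 0"
  proof (cases "om y u1 = 0")
    case False then show ?thesis using that u1 by blast
  next
    case yu1: True
    show ?thesis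
    proof (cases "om x u2 = 0")
      case False then show ?thesis using that u2 by blast
    next
      case xu2: True
      show ?thesis
        apply (rule that[of "u1 + u2"])
        using u1 u2 yu1 xu2 by (simp_all add: om_add2)
    qed
  qed
  have u3x: "om u3 x \<noteq> 0" using u3(3) om_zero_sym by blast
  define a where "a = - qq u3 / om u3 x"
  define z where "z = u3 + s a x"
  have xz: "om x z \<noteq> 0" unfolding z_def using u3 xx by (simp add: om_add2 om_s2)
  have yz: "om y z \<noteq> 0" unfolding z_def using u3 yx by (simp add: om_add2 om_s2)
  have zy: "om z y \<noteq> 0" using yz om_zero_sym by blast
  have zI: "\<forall>i\<in>I. om z i = 0"
  proof
    fix i assume "i \<in> I"
    then have "om u3 i = 0" "om x i = 0" using u3(1) xI om_zero_sym by blast+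
    then show "om z i = 0" unfolding z_def by (simp add: om_add1 om_s1)
  qed
  have zS: "\<forall>t\<in>S. om z t = 0"
  proof
    fix t assume "t \<in> S"
    then have "om u3 t = 0" "om x t = 0" using u3(2) xS om_zero_sym by blast+
    then show "om z t = 0" unfolding z_def by (simp add: om_add1 om_s1)
  qed
  have iz: "isov z" unfolding isov_def
  proof
    fix b
    have e: "s b z = s b u3 + s (b * a) x" unfolding z_def by (simp add: scale_right_distrib)
    have A: "qq (s b u3 + s (b * a) x) - (qq (s b u3) + qq (s (b * a) x) + om (s b u3) (s (b * a) x)) \<in> \<Lambda>"
      by (rule qq_add)
    have a0: "qq u3 + om u3 x * a = 0" unfolding a_def using u3x by simp
    have "qq (s b u3) + om (s b u3) (s (b * a) x) = \<sigma> b * qq u3 * b + \<sigma> b * om u3 x * (b * a)"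
      by (simp add: qq_s om_s1 om_s2)
    also have "\<dots> = \<sigma> b * b * (qq u3 + om u3 x * a)" by (simp add: algebra_simps)
    finally have B: "qq (s b u3) + om (s b u3) (s (b * a) x) = 0" using a0 by simp
    have C: "qq (s (b * a) x) \<in> \<Lambda>" using ix unfolding isov_def by blast
    have "qq (s b z) = (qq (s b u3 + s (b * a) x) - (qq (s b u3) + qq (s (b * a) x) + om (s b u3) (s (b * a) x)))
        + qq (s (b * a) x)" using B unfolding e by (simp add: algebra_simps)
    then show "qq (s b z) \<in> \<Lambda>" using A C lam_add by metis
  qed
  obtain g1 where g1: "isoG g1" "\<forall>v\<in>S. g1 v = v" "\<forall>v\<in>I. g1 v = v" "g1 ` span (insert x I) = span (insert z I)"
    using swap_image[OF ix iz xz xI zI xS zS] by blast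
  obtain g2 where g2: "isoG g2" "\<forall>v\<in>S. g2 v = v" "\<forall>v\<in>I. g2 v = v" "g2 ` span (insert z I) = span (insert y I)"
    using swap_image[OF iz iy zy zI yI zS yS] by blast
  have "isoG (g2 \<circ> g1)" by (rule isoG_comp[OF g1(1) g2(1)])
  moreover have "(g2 \<circ> g1) ` span (insert x I) = span (insert y I)" by (simp only: image_comp[symmetric] g1(4) g2(4))
  moreover have "\<forall>v\<in>S. (g2 \<circ> g1) v = v" "\<forall>v\<in>I. (g2 \<circ> g1) v = v" using g1 g2 by simp_all
  ultimately show ?thesis by blast
qed

end

context fspace begin

abbreviation rad where "rad \<equiv> radical \<sigma> \<epsilon> \<Lambda> q"

lemma dim_img:
  assumes "Vector_Spaces.linear s s g" "inj g" shows "dim (g ` W) = dim W"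
proof -
  interpret p1: finite_dimensional_vector_space_pair_1 s Basis s by unfold_locales
  show ?thesis using p1.dim_image_eq[OF assms(1)] assms(2) by (simp add: inj_on_subset)
qed

lemma subspace_kerom: "subspace {v. om y v = 0}"
  unfolding subspace_def by (simp add: om_add2 om_s2)

lemma span_insert_span: "span (insert x (span A)) = span (insert x A)"
proof (rule antisym)
  have "insert x (span A) \<subseteq> span (insert x A)"
    using span_base[of x "insert x A"] span_mono[of A "insert x A"] by auto
  then show "span (insert x (span A)) \<subseteq> span (insert x A)"
    using span_minimal[OF _ subspace_span] by blast
  have "insert x A \<subseteq> insert x (span A)" using span_superset by auto
  then show "span (insert x A) \<subseteq> span (insert x (span A))" by (rule span_mono)
qed

lemma subspace_span_eq: "subspace W \<Longrightarrow> span W = W"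
  by simp

lemma N_lemma:
  assumes sU: "subspace U" and iU: "iso U" and JU: "sum_space J (perpS U) = UNIV"
    and RJ: "rad \<subseteq> J" and sI: "subspace I" and JI: "J \<subseteq> I"
    and ix: "iso (span (insert x I))" and xI: "x \<notin> I"
  shows "\<exists>u. (\<forall>i\<in>I. om i u = 0) \<and> (\<forall>t\<in>U. om t u = 0) \<and> om x u \<noteq> 0"
proof (rule ccontr)
  assume "\<not> ?thesis"
  then have H: "\<forall>u. (\<forall>i\<in>I. om i u = 0) \<and> (\<forall>t\<in>U. om t u = 0) \<longrightarrow> om x u = 0" by blast
  obtain BI where BI: "BI \<subseteq> I" "independent BI" "I \<subseteq> span BI" "card BI = dim I" by (rule basis_exists)
  obtain BU where BU: "BU \<subseteq> U" "independent BU" "U \<subseteq> span BU" "card BU = dim U" by (rule basis_exists)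
  have fin: "finite (BI \<union> BU)" using finiteI_independent[OF BI(2)] finiteI_independent[OF BU(2)] by simp
  have "\<forall>u. (\<forall>t\<in>BI \<union> BU. om t u = 0) \<longrightarrow> om x u = 0"
  proof (intro allI impI)
    fix u assume a: "\<forall>t\<in>BI \<union> BU. om t u = 0"
    have "\<forall>i\<in>I. om i u = 0" using om_span1[of BI u] a BI(3) by auto
    moreover have "\<forall>t\<in>U. om t u = 0" using om_span1[of BU u] a BU(3) by auto
    ultimately show "om x u = 0" using H by simp
  qed
  then obtain t where t: "t \<in> span (BI \<union> BU)" "\<forall>u. om (x - t) u = 0"
    using perp_lemma[OF fin] by blast
  then obtain i u0 where iu: "t = i + u0" "i \<in> span BI" "u0 \<in> span BU" unfolding span_Un by blast
  have iI: "i \<in> I" using iu(2) BI(1) sI span_minimal by blast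
  have u0U: "u0 \<in> U" using iu(3) BU(1) sU span_minimal by blast
  have xs: "x \<in> span (insert x I)" by (simp add: span_base)
  have Is: "I \<subseteq> span (insert x I)" by (meson span_mono span_superset subset_insertI subset_trans)
  have omiso: "om a b = 0" if "a \<in> span (insert x I)" "b \<in> span (insert x I)" for a b
    using ix that unfolding isotropic_def by blast
  have u0rad: "u0 \<in> rad" unfolding radical_def
  proof (intro CollectI conjI allI)
    fix e
    obtain j p where jp: "e = j + p" "j \<in> J" "p \<in> perpS U" using JU unfolding sum_space_def by blast
    have "om j (x - t) = 0" using t(2) om_zero_sym by blast
    moreover have "om j x = 0" "om j i = 0" using jp(2) JI Is xs iI omiso by blast+
    ultimately have "om j u0 = 0" using iu(1) by (simp add: om_diff2 om_add2)
    moreover have "om p u0 = 0" using jp(3) u0U unfolding perp_def by blast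
    ultimately show "om e u0 = 0" using jp(1) by (simp add: om_add1)
  next
    show "qq u0 \<in> \<Lambda>" using iU u0U unfolding isotropic_def by blast
  qed
  then have u0I: "u0 \<in> I" using RJ JI by blast
  have tI: "t \<in> I" using iu(1) iI u0I sI subspace_add by blast
  have "x - t \<in> span (insert x I)" using xs Is tI span_diff by blast
  then have "qq (x - t) \<in> \<Lambda>" using ix unfolding isotropic_def by blast
  moreover have "\<forall>u. om u (x - t) = 0" using t(2) om_zero_sym by blast
  ultimately have "x - t \<in> rad" unfolding radical_def by blast
  then have "x - t \<in> I" using RJ JI by blast
  then have "(x - t) + t \<in> I" using tI sI subspace_add by blast
  then have "x \<in> I" by simp
  then show False using xI by blast
qed

lemma GW_step:
  assumes sU: "subspace U" and iU: "iso U" and sJ: "subspace J" and RJ: "rad \<subseteq> J"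
    and JU: "sum_space J (perpS U) = UNIV"
    and sW: "subspace W" and iW: "iso W" and JW: "J \<subseteq> W"
    and sW': "subspace W'" and iW': "iso W'" and JW': "J \<subseteq> W'"
    and dW: "dim W = dim W'" and ne: "W \<noteq> W'"
  shows "\<exists>g W2. isoG g \<and> (\<forall>u\<in>U. g u = u) \<and> g ` W = W2 \<and> subspace W2 \<and> iso W2 \<and> J \<subseteq> W2
           \<and> dim W2 = dim W' \<and> W \<inter> W' \<subset> W2 \<inter> W'"
proof -
  have dec: "\<exists>j\<in>J. v - j \<in> perpS U" for v
  proof -
    obtain j p where "v = j + p" "j \<in> J" "p \<in> perpS U" using JU unfolding sum_space_def by blast
    then show ?thesis by (intro bexI[of _ j]) simp_all
  qed
  have W'W: "\<not> W' \<subseteq> W"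
    using subspace_dim_equal[OF sW' sW] dW ne by auto
  have WW': "\<not> W \<subseteq> W'"
    using subspace_dim_equal[OF sW sW'] dW ne by auto
  obtain w' where w': "w' \<in> W'" "w' \<notin> W" using W'W by blast
  obtain j where j: "j \<in> J" "w' - j \<in> perpS U" using dec by blast
  define y where "y = w' - j"
  have yW': "y \<in> W'" unfolding y_def using w'(1) j(1) JW' sW' subspace_diff by blast
  have yW: "y \<notin> W"
  proof
    assume "y \<in> W"
    then have "y + j \<in> W" using j(1) JW sW subspace_add by blast
    then show False using w'(2) unfolding y_def by simp
  qed
  have yU: "y \<in> perpS U" unfolding y_def using j(2) .
  have omW: "\<And>a b. a \<in> W \<Longrightarrow> b \<in> W \<Longrightarrow> om a b = 0" using iW unfolding isotropic_def by blast
  have omW': "\<And>a b. a \<in> W' \<Longrightarrow> b \<in> W' \<Longrightarrow> om a b = 0" using iW' unfolding isotropic_def by blast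
  have yJ: "om y j = 0" if "j \<in> J" for j using omW' yW' that JW' by blast
  obtain I1 x where I1: "subspace I1" "I1 \<subseteq> W" "W = span (insert x I1)" "x \<in> W" "x \<in> perpS U"
      "x \<notin> I1" "W \<inter> W' \<subseteq> I1" "\<forall>i\<in>I1. om y i = 0"
  proof (cases "\<exists>x\<in>W \<inter> perpS U. om y x \<noteq> 0")
    case True
    then obtain x where x: "x \<in> W" "x \<in> perpS U" "om y x \<noteq> 0" by blast
    define I1 where "I1 = W \<inter> {v. om y v = 0}"
    have s1: "subspace I1" unfolding I1_def by (rule subspace_inter[OF sW subspace_kerom])
    have "W \<subseteq> span (insert x I1)"
    proof
      fix w assume w: "w \<in> W"
      define k where "k = om y w / om y x"
      have "w - s k x \<in> I1" unfolding I1_def k_def using w x sW subspace_diff subspace_scale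
        by (simp add: om_diff2 om_s2)
      then show "w \<in> span (insert x I1)" unfolding span_breakdown_eq using span_superset by blast
    qed
    moreover have "span (insert x I1) \<subseteq> W"
      using x(1) sW span_minimal[of "insert x I1" W] unfolding I1_def by blast
    ultimately have "W = span (insert x I1)" by blast
    moreover have "W \<inter> W' \<subseteq> I1" unfolding I1_def using omW' yW' by blast
    moreover have "x \<notin> I1" unfolding I1_def using x by blast
    ultimately show ?thesis using that[of I1 x] s1 x unfolding I1_def by blast
  next
    case False
    have yWz: "\<forall>w\<in>W. om y w = 0"
    proof
      fix w assume w: "w \<in> W"
      obtain j where j: "j \<in> J" "w - j \<in> perpS U" using dec by blast
      have "w - j \<in> W" using w j(1) JW sW subspace_diff by blast
      then have "om y (w - j) = 0" using False j(2) by blast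
      moreover have "om y j = 0" using yJ j(1) by blast
      ultimately show "om y w = 0" by (simp add: om_diff2)
    qed
    obtain B0 where B0: "B0 \<subseteq> W \<inter> W'" "independent B0" "W \<inter> W' \<subseteq> span B0" "card B0 = dim (W \<inter> W')"
      by (rule basis_exists)
    obtain B where B: "B0 \<subseteq> B" "B \<subseteq> B0 \<union> (W \<inter> perpS U)" "independent B" "B0 \<union> (W \<inter> perpS U) \<subseteq> span B"
      using maximal_independent_subset_extend[of B0 "B0 \<union> (W \<inter> perpS U)"] B0(2) by blast
    have sWW': "subspace (W \<inter> W')" by (rule subspace_inter[OF sW sW'])
    have BW: "B \<subseteq> W" using B(2) B0(1) by blast
    have WB: "W \<subseteq> span B"
    proof
      fix w assume w: "w \<in> W"
      obtain j where j: "j \<in> J" "w - j \<in> perpS U" using dec by blast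
      have "w - j \<in> W" using w j(1) JW sW subspace_diff by blast
      then have "w - j \<in> span B" using j(2) B(4) by blast
      moreover have "j \<in> span B" using j(1) JW JW' B0(3) span_mono[OF B(1)] by blast
      ultimately have "(w - j) + j \<in> span B" by (rule span_add)
      then show "w \<in> span B" by simp
    qed
    have spB: "span B = W" using WB BW sW span_minimal by blast
    obtain x where x: "x \<in> B" "x \<notin> B0"
    proof (rule ccontr)
      assume "\<not> thesis"
      then have "B \<subseteq> B0" using that by blast
      then have "W \<subseteq> span B0" using WB span_mono by blast
      also have "span B0 \<subseteq> W \<inter> W'" using B0(1) sWW' span_minimal by blast
      finally show False using WW' by blast
    qed
    have xW: "x \<in> W" "x \<in> perpS U" using x B(2) BW by blast+
    define I1 where "I1 = span (B - {x})"
    have s1: "subspace I1" unfolding I1_def by simp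
    have xI1: "x \<notin> I1" unfolding I1_def using B(3) x(1) dependent_def by blast
    have "span (insert x I1) = span (insert x (B - {x}))" unfolding I1_def by (rule span_insert_span)
    also have "insert x (B - {x}) = B" using x(1) by blast
    finally have WI: "W = span (insert x I1)" using spB by simp
    have I1W: "I1 \<subseteq> W" unfolding I1_def using BW sW span_minimal by blast
    have "W \<inter> W' \<subseteq> I1" unfolding I1_def using B0(3) span_mono[of B0 "B - {x}"] B(1) x(2) by blast
    moreover have "\<forall>i\<in>I1. om y i = 0" using I1W yWz by blast
    ultimately show ?thesis using that[of I1 x] s1 I1W WI xW xI1 by blast
  qed
  have JI1: "J \<subseteq> I1" using I1(7) JW JW' by blast
  have iI1: "iso I1" using iW I1(2) unfolding isotropic_def by blast
  have ix: "isov x" using iso_isov[OF iW sW I1(4)] .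
  have iy: "isov y" using iso_isov[OF iW' sW' yW'] .
  have xI: "\<forall>i\<in>I1. om x i = 0" using omW I1(2) I1(4) by blast
  have yI: "\<forall>i\<in>I1. om y i = 0" using I1(8) .
  have xS: "\<forall>t\<in>U. om x t = 0" using I1(5) unfolding perp_def by blast
  have yS: "\<forall>t\<in>U. om y t = 0" using yU unfolding perp_def by blast
  have isx: "iso (span (insert x I1))" using iW I1(3) by simp
  have isy: "iso (span (insert y I1))" by (rule iso_span_insert[OF I1(1) iI1 yI iy])
  have yI1: "y \<notin> I1" using yW I1(2) by blast
  have NX: "\<exists>u. (\<forall>i\<in>I1. om i u = 0) \<and> (\<forall>t\<in>U. om t u = 0) \<and> om x u \<noteq> 0"
    by (rule N_lemma[OF sU iU JU RJ I1(1) JI1 isx I1(6)])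
  have NY: "\<exists>u. (\<forall>i\<in>I1. om i u = 0) \<and> (\<forall>t\<in>U. om t u = 0) \<and> om y u \<noteq> 0"
    by (rule N_lemma[OF sU iU JU RJ I1(1) JI1 isy yI1])
  obtain g where g: "isoG g" "\<forall>v\<in>U. g v = v" "g ` span (insert x I1) = span (insert y I1)"
    using move_lemma[OF ix iy xI yI xS yS NX NY] by blast
  define W2 where "W2 = span (insert y I1)"
  have gW: "g ` W = W2" unfolding W2_def using g(3) I1(3) by simp
  have lin: "Vector_Spaces.linear s s g" and ing: "inj g" using g(1) unfolding isoG_def bij_def by blast+
  have dW2: "dim W2 = dim W'" using dim_img[OF lin ing, of W] gW dW by simp
  have JW2: "J \<subseteq> W2" unfolding W2_def using JI1 span_superset by blast
  have ss: "W \<inter> W' \<subset> W2 \<inter> W'"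
  proof -
    have "W \<inter> W' \<subseteq> W2 \<inter> W'" unfolding W2_def using I1(7) span_superset by blast
    moreover have "y \<in> W2 \<inter> W'" unfolding W2_def using yW' span_base by blast
    ultimately show ?thesis using yW by blast
  qed
  show ?thesis
    apply (rule exI[of _ g], rule exI[of _ W2])
    using g(1,2) gW dW2 JW2 ss isy unfolding W2_def by simp
qed

end

context fspace begin

lemma GW:
  assumes sU: "subspace U" and iU: "iso U" and sJ: "subspace J" and RJ: "rad \<subseteq> J"
    and JU: "sum_space J (perpS U) = UNIV"
    and sW': "subspace W'" and iW': "iso W'" and JW': "J \<subseteq> W'"
  shows "subspace W \<Longrightarrow> iso W \<Longrightarrow> J \<subseteq> W \<Longrightarrow> dim W = dim W'
     \<Longrightarrow> \<exists>g. isoG g \<and> (\<forall>u\<in>U. g u = u) \<and> g ` W = W'"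
proof (induction "dim W' - dim (W \<inter> W')" arbitrary: W rule: less_induct)
  case less
  show ?case
  proof (cases "W = W'")
    case True
    then show ?thesis using isoG_id by (intro exI[of _ id]) simp
  next
    case False
    obtain g W2 where g: "isoG g" "\<forall>u\<in>U. g u = u" "g ` W = W2" "subspace W2" "iso W2" "J \<subseteq> W2"
      "dim W2 = dim W'" "W \<inter> W' \<subset> W2 \<inter> W'"
      using GW_step[OF sU iU sJ RJ JU less.prems(1,2,3) sW' iW' JW' less.prems(4) False] by blast
    have s1: "subspace (W \<inter> W')" using subspace_inter less.prems(1) sW' by blast
    have s2: "subspace (W2 \<inter> W')" using subspace_inter g(4) sW' by blast
    have e1: "span (W \<inter> W') = W \<inter> W'" using s1 by simp
    have e2: "span (W2 \<inter> W') = W2 \<inter> W'" using s2 by simp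
    have "dim (W \<inter> W') < dim (W2 \<inter> W')"
      using dim_psubset[of "W \<inter> W'" "W2 \<inter> W'"] g(8) unfolding e1 e2 by blast
    moreover have "dim (W2 \<inter> W') \<le> dim W'" by (rule dim_subset) blast
    ultimately have lt: "dim W' - dim (W2 \<inter> W') < dim W' - dim (W \<inter> W')" by linarith
    obtain g' where g': "isoG g'" "\<forall>u\<in>U. g' u = u" "g' ` W2 = W'"
      using less.hyps[OF lt g(4) g(5) g(6) g(7)] by blast
    have "isoG (g' \<circ> g)" by (rule isoG_comp[OF g(1) g'(1)])
    moreover have "\<forall>u\<in>U. (g' \<circ> g) u = u" using g(2) g'(2) by simp
    moreover have "(g' \<circ> g) ` W = W'" using g(3) g'(3) by (simp only: image_comp[symmetric])
    ultimately show ?thesis by blast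
  qed
qed

lemma part3: "transitive_on_dims s (isom_grp s \<sigma> \<epsilon> \<Lambda> q) (Pom s \<sigma> \<epsilon> \<Lambda> q)"
  unfolding transitive_on_dims_def
proof (intro ballI impI)
  fix W W' assume W: "W \<in> Pom s \<sigma> \<epsilon> \<Lambda> q" and W': "W' \<in> Pom s \<sigma> \<epsilon> \<Lambda> q" and d: "dim W = dim W'"
  have sW: "subspace W" and iW: "iso W" and rW: "rad \<subseteq> W" using W unfolding Pom_def by blast+
  have sW': "subspace W'" and iW': "iso W'" and rW': "rad \<subseteq> W'" using W' unfolding Pom_def by blast+
  have s0: "subspace {0}" by simp
  have i0: "iso {0}" unfolding isotropic_def by simp
  have JU: "sum_space (span rad) (perpS {0}) = UNIV"
    unfolding sum_space_def perp_def by (force intro: span_zero)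
  have JW: "span rad \<subseteq> W" using rW sW span_minimal by blast
  have JW': "span rad \<subseteq> W'" using rW' sW' span_minimal by blast
  obtain g where "isoG g" "g ` W = W'"
    using GW[OF s0 i0 subspace_span span_superset JU sW' iW' JW' sW iW JW d] by blast
  then show "\<exists>g\<in>isom_grp s \<sigma> \<epsilon> \<Lambda> q. g ` W = W'" using isoG_isom by blast
qed

end

context fspace begin

lemma fix_span:
  assumes "Vector_Spaces.linear s s h" "\<forall>b\<in>B. h b = b" "v \<in> span B"
  shows "h v = v"
proof -
  interpret lh: Vector_Spaces.linear s s h by fact
  show ?thesis using assms(3)
  proof (induct rule: span_induct)
    case base show ?case unfolding subspace_def by (simp add: lh.add lh.scale)
  next
    case (step x) then show ?case using assms(2) by blast
  qed
qed

lemma isoG_parts: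
  assumes "isoG g"
  shows "Vector_Spaces.linear s s g" "inj g" "\<And>v w. om (g v) (g w) = om v w" "\<And>v. qq (g v) - qq v \<in> \<Lambda>"
  using assms unfolding isoG_def bij_def by blast+

lemma isoG_qq: "isoG g \<Longrightarrow> qq v \<in> \<Lambda> \<Longrightarrow> qq (g v) \<in> \<Lambda>"
  using isoG_parts(4)[of g v] lam_add[of "qq (g v) - qq v" "qq v"] by simp

lemma isoG_isov: "isoG g \<Longrightarrow> isov w \<Longrightarrow> isov (g w)"
proof -
  assume g: "isoG g" and w: "isov w"
  interpret lg: Vector_Spaces.linear s s g by (rule isoG_parts(1)[OF g])
  show "isov (g w)" unfolding isov_def
  proof
    fix a
    have "qq (s a w) \<in> \<Lambda>" using w unfolding isov_def by blast
    then have "qq (g (s a w)) \<in> \<Lambda>" by (rule isoG_qq[OF g])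
    then show "qq (s a (g w)) \<in> \<Lambda>" by (simp add: lg.scale)
  qed
qed

lemma isoG_image:
  assumes g: "isoG g" and sW: "subspace W" and iW: "iso W"
  shows "subspace (g ` W)" "iso (g ` W)"
proof -
  have lin: "Vector_Spaces.linear s s g" by (rule isoG_parts(1)[OF g])
  have e: "span W = W" using sW by simp
  have "g ` W = span (g ` W)" using lin_span_image[OF lin, of W] by (simp only: e)
  then show "subspace (g ` W)" by (metis subspace_span)
  show "iso (g ` W)" unfolding isotropic_def
  proof (intro conjI ballI)
    fix a b assume "a \<in> g ` W" "b \<in> g ` W"
    then obtain a' b' where "a' \<in> W" "b' \<in> W" "a = g a'" "b = g b'" by blast
    then show "om a b = 0" using iW isoG_parts(3)[OF g] unfolding isotropic_def by simp
  next
    fix a assume "a \<in> g ` W"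
    then obtain a' where "a' \<in> W" "a = g a'" by blast
    then show "qq a \<in> \<Lambda>" using iW isoG_qq[OF g] unfolding isotropic_def by simp
  qed
qed

lemma radw_subspace: "subspace radw"
  unfolding subspace_def radw_def by (simp add: om_add2 om_s2)

lemma rad_radw: "rad \<subseteq> radw"
  unfolding radical_def radw_def by blast

lemma part4:
  assumes U: "U \<in> Pom s \<sigma> \<epsilon> \<Lambda> q"
  shows "transitive_on_dims s (fix_grp s \<sigma> \<epsilon> \<Lambda> q U) (Pom_rel s \<sigma> \<epsilon> \<Lambda> q U)"
  unfolding transitive_on_dims_def
proof (intro ballI impI)
  fix W W' assume W: "W \<in> Pom_rel s \<sigma> \<epsilon> \<Lambda> q U" and W': "W' \<in> Pom_rel s \<sigma> \<epsilon> \<Lambda> q U"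
    and d: "dim W = dim W'"
  have sU: "subspace U" and iU: "iso U" and rU: "rad \<subseteq> U" using U unfolding Pom_def by blast+
  have sW: "subspace W" and iW: "iso W" and rW: "rad \<subseteq> W" and WU: "sum_space W (perpS U) = UNIV"
    using W unfolding Pom_rel_def Pom_def by blast+
  have sW': "subspace W'" and iW': "iso W'" and rW': "rad \<subseteq> W'" and WU': "sum_space W' (perpS U) = UNIV"
    using W' unfolding Pom_rel_def Pom_def by blast+
  have omU: "\<And>a b. a \<in> U \<Longrightarrow> b \<in> U \<Longrightarrow> om a b = 0" using iU unfolding isotropic_def by blast
  have omW: "\<And>a b. a \<in> W \<Longrightarrow> b \<in> W \<Longrightarrow> om a b = 0" using iW unfolding isotropic_def by blast
  have omW': "\<And>a b. a \<in> W' \<Longrightarrow> b \<in> W' \<Longrightarrow> om a b = 0" using iW' unfolding isotropic_def by blast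
  obtain BR where BR: "BR \<subseteq> span rad" "independent BR" "span rad \<subseteq> span BR" "card BR = dim (span rad)"
    by (rule basis_exists)
  have sradU: "span rad \<subseteq> U" using rU sU span_minimal by blast
  obtain BU where BU: "BR \<subseteq> BU" "BU \<subseteq> U" "independent BU" "U \<subseteq> span BU"
    using maximal_independent_subset_extend[of BR U] BR(1,2) sradU by blast
  have finBU: "finite BU" using finiteI_independent[OF BU(3)] .
  define B1 where "B1 = BU - BR"
  have finB1: "finite B1" unfolding B1_def using finBU by simp
  have BRw: "om b v = 0" "om v b = 0" if "b \<in> BR" for b v
  proof -
    have "b \<in> radw" using that BR(1) span_minimal[OF rad_radw radw_subspace] by blast
    then show "om v b = 0" unfolding radw_def by blast
    then show "om b v = 0" using om_zero_sym by blast
  qed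
  have ex_e: "\<exists>e. (\<forall>b'\<in>BU - {b}. om b' e = 0) \<and> om b e = 1" if b: "b \<in> B1" for b
  proof -
    have bBU: "b \<in> BU" "b \<notin> BR" using b unfolding B1_def by blast+
    have "\<exists>u. (\<forall>t\<in>BU - {b}. om t u = 0) \<and> om b u \<noteq> 0"
    proof (rule ccontr)
      assume "\<not> ?thesis"
      then have "\<forall>u. (\<forall>t\<in>BU - {b}. om t u = 0) \<longrightarrow> om b u = 0" by blast
      then obtain t where t: "t \<in> span (BU - {b})" "\<forall>u. om (b - t) u = 0"
        using perp_lemma[of "BU - {b}" b] finBU by blast
      have tU: "t \<in> U" using t(1) BU(2) sU span_minimal[of "BU - {b}" U] by blast
      have bU: "b \<in> U" using bBU BU(2) by blast
      have "b - t \<in> U" using tU bU sU subspace_diff by blast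
      then have "qq (b - t) \<in> \<Lambda>" using iU unfolding isotropic_def by blast
      moreover have "\<forall>u. om u (b - t) = 0" using t(2) om_zero_sym by blast
      ultimately have "b - t \<in> rad" unfolding radical_def by blast
      then have "b - t \<in> span BR" using BR(3) span_superset by blast
      moreover have "span BR \<subseteq> span (BU - {b})" using BU(1) bBU(2) by (intro span_mono) blast
      ultimately have "b - t \<in> span (BU - {b})" by blast
      then have "(b - t) + t \<in> span (BU - {b})" using t(1) span_add by blast
      then have "b \<in> span (BU - {b})" by simp
      then show False using BU(3) bBU(1) dependent_def by blast
    qed
    then obtain u where u: "\<forall>t\<in>BU - {b}. om t u = 0" "om b u \<noteq> 0" by blast
    show ?thesis
      apply (rule exI[of _ "s (inverse (om b u)) u"])
      using u by (simp add: om_s2)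
  qed
  have ex_w: "\<exists>w\<in>X. \<forall>b'\<in>BU. om b' w = (if b' = b then 1 else 0)"
    if b: "b \<in> B1" and XU: "sum_space X (perpS U) = UNIV" for b X
  proof -
    obtain e where e: "\<forall>b'\<in>BU - {b}. om b' e = 0" "om b e = 1" using ex_e[OF b] by blast
    obtain w p where wp: "e = w + p" "w \<in> X" "p \<in> perpS U" using XU unfolding sum_space_def by blast
    have "om b' p = 0" if "b' \<in> BU" for b'
    proof -
      have "om p b' = 0" using wp(3) that BU(2) unfolding perp_def by blast
      then show ?thesis using om_zero_sym by blast
    qed
    then have "om b' w = om b' e" if "b' \<in> BU" for b' using that wp(1) by (simp add: om_add2)
    then show ?thesis using e wp(2) by (intro bexI[of _ w]) auto
  qed
  obtain wf where wf: "\<forall>b\<in>B1. wf b \<in> W \<and> (\<forall>b'\<in>BU. om b' (wf b) = (if b' = b then 1 else 0))"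
    using ex_w[OF _ WU] by metis
  obtain wf' where wf': "\<forall>b\<in>B1. wf' b \<in> W' \<and> (\<forall>b'\<in>BU. om b' (wf' b) = (if b' = b then 1 else 0))"
    using ex_w[OF _ WU'] by metis
  have seq: "F \<subseteq> B1 \<Longrightarrow> \<exists>g. isoG g \<and> (\<forall>u\<in>U. g u = u) \<and> (\<forall>b\<in>F. g (wf b) = wf' b)" if fF: "finite F" for F
    using fF
  proof (induction F rule: finite_induct)
    case empty then show ?case by (intro exI[of _ id] conjI isoG_id) simp_all
  next
    case (insert b F)
    obtain g where g: "isoG g" "\<forall>u\<in>U. g u = u" "\<forall>b\<in>F. g (wf b) = wf' b" using insert by blast
    have bB1: "b \<in> B1" using insert.prems by blast
    have bBU: "b \<in> BU" using bB1 unfolding B1_def by blast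
    have bU: "b \<in> U" using bBU BU(2) by blast
    have ib: "isov b" by (rule iso_isov[OF iU sU bU])
    have iw: "isov (g (wf b))" using isoG_isov[OF g(1) iso_isov[OF iW sW]] wf bB1 by blast
    have iw': "isov (wf' b)" using iso_isov[OF iW' sW'] wf' bB1 by blast
    have omg: "\<And>v w. om (g v) (g w) = om v w" by (rule isoG_parts(3)[OF g(1)])
    have uw: "om b (g (wf b)) = 1" using omg[of b "wf b"] g(2) bU wf bB1 bBU by simp
    have uw': "om b (wf' b) = 1" using wf' bB1 bBU by simp
    obtain h where h: "isoG h" "h b = b" "h (g (wf b)) = wf' b"
      "\<forall>v. om b v = 0 \<and> om (g (wf b)) v = 0 \<and> om (wf' b) v = 0 \<longrightarrow> h v = v"
      using sp_lemma[OF ib iw iw' uw uw'] by blast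
    have hB: "\<forall>b'\<in>BU. h b' = b'"
    proof
      fix b' assume b': "b' \<in> BU"
      show "h b' = b'"
      proof (cases "b' = b")
        case True then show ?thesis using h(2) by simp
      next
        case False
        have b'U: "b' \<in> U" using b' BU(2) by blast
        have "om b b' = 0" using omU bU b'U by blast
        moreover have "om (g (wf b)) b' = 0"
        proof -
          have "om b' (wf b) = 0" using wf bB1 b' False by simp
          then have "om (wf b) b' = 0" using om_zero_sym by blast
          then show ?thesis using omg[of "wf b" b'] g(2) b'U by simp
        qed
        moreover have "om (wf' b) b' = 0"
        proof -
          have "om b' (wf' b) = 0" using wf' bB1 b' False by simp
          then show ?thesis using om_zero_sym by blast
        qed
        ultimately show ?thesis using h(4) by blast
      qed
    qed
    have hU: "\<forall>u\<in>U. h u = u" using fix_span[OF isoG_parts(1)[OF h(1)] hB] BU(4) by blast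
    have hF: "\<forall>b''\<in>F. h (wf' b'') = wf' b''"
    proof
      fix b'' assume b'': "b'' \<in> F"
      have nb: "b'' \<noteq> b" using b'' insert.hyps(2) by blast
      have b''B1: "b'' \<in> B1" using b'' insert.prems by blast
      have "om b (wf' b'') = 0" using wf' b''B1 bBU nb by simp
      moreover have "om (g (wf b)) (wf' b'') = 0"
      proof -
        have "om (g (wf b)) (g (wf b'')) = om (wf b) (wf b'')" by (rule omg)
        also have "\<dots> = 0" using omW wf bB1 b''B1 by blast
        finally show ?thesis using g(3) b'' by simp
      qed
      moreover have "om (wf' b) (wf' b'') = 0" using omW' wf' bB1 b''B1 by blast
      ultimately show "h (wf' b'') = wf' b''" using h(4) by blast
    qed
    have "isoG (h \<circ> g)" by (rule isoG_comp[OF g(1) h(1)])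
    moreover have "\<forall>u\<in>U. (h \<circ> g) u = u" using g(2) hU by simp
    moreover have "\<forall>b'\<in>insert b F. (h \<circ> g) (wf b') = wf' b'" using g(3) hF h(3) by simp
    ultimately show ?case by blast
  qed
  obtain g1 where g1: "isoG g1" "\<forall>u\<in>U. g1 u = u" "\<forall>b\<in>B1. g1 (wf b) = wf' b"
    using seq[OF finB1] by blast
  define J where "J = span (rad \<union> wf' ` B1)"
  have sJ: "subspace J" unfolding J_def by simp
  have RJ: "rad \<subseteq> J" unfolding J_def using span_superset by blast
  have JW': "J \<subseteq> W'" unfolding J_def using rW' wf' sW' by (intro span_minimal) auto
  have JW1: "J \<subseteq> g1 ` W"
  proof -
    have lin: "Vector_Spaces.linear s s g1" by (rule isoG_parts(1)[OF g1(1)])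
    have "g1 ` (rad \<union> wf ` B1) = rad \<union> wf' ` B1"
    proof -
      have "g1 ` rad = rad" using g1(2) rU by (force intro: image_eqI)
      moreover have "g1 ` (wf ` B1) = wf' ` B1" using g1(3) by (force simp: image_comp)
      ultimately show ?thesis by (simp add: image_Un)
    qed
    then have "J = g1 ` span (rad \<union> wf ` B1)" unfolding J_def using lin_span_image[OF lin] by simp
    moreover have "span (rad \<union> wf ` B1) \<subseteq> W" using rW wf sW by (intro span_minimal) auto
    ultimately show ?thesis by blast
  qed
  have JU: "sum_space J (perpS U) = UNIV"
  proof -
    have cl: "F \<subseteq> B1 \<Longrightarrow> \<exists>j\<in>span (wf' ` F). \<forall>b'\<in>F. om b' (e - j) = 0" if fF: "finite F" for F e
      using fF
    proof (induction F rule: finite_induct)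
      case empty then show ?case by (intro bexI[of _ 0]) (simp_all add: span_zero)
    next
      case (insert b F)
      obtain j where j: "j \<in> span (wf' ` F)" "\<forall>b'\<in>F. om b' (e - j) = 0" using insert by blast
      have bB1: "b \<in> B1" using insert.prems by blast
      have bBU: "b \<in> BU" using bB1 unfolding B1_def by blast
      define j2 where "j2 = j + s (om b (e - j)) (wf' b)"
      have "j2 \<in> span (wf' ` insert b F)" unfolding j2_def
        using span_mono[of "wf' ` F" "wf' ` insert b F"] j(1)
        by (intro span_add span_scale) (auto intro: span_base)
      moreover have "\<forall>b'\<in>insert b F. om b' (e - j2) = 0"
      proof
        fix b' assume b': "b' \<in> insert b F"
        have b'BU: "b' \<in> BU" using b' insert.prems unfolding B1_def by blast
        show "om b' (e - j2) = 0"
        proof (cases "b' = b")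
          case True then show ?thesis unfolding j2_def using wf' bB1 bBU by (simp add: om_diff2 om_add2 om_s2)
        next
          case False
          then have "b' \<in> F" using b' by blast
          then show ?thesis unfolding j2_def using wf' bB1 b'BU False j(2)
            by (simp add: om_diff2 om_add2 om_s2 diff_add_eq_diff_diff_swap)
        qed
      qed
      ultimately show ?case by blast
    qed
    show ?thesis unfolding sum_space_def
    proof (intro set_eqI iffI; simp)
      fix e
      obtain j where j: "j \<in> span (wf' ` B1)" "\<forall>b'\<in>B1. om b' (e - j) = 0" using cl[OF finB1] by blast
      have "\<forall>b'\<in>BU. om b' (e - j) = 0"
      proof
        fix b' assume b': "b' \<in> BU"
        show "om b' (e - j) = 0"
        proof (cases "b' \<in> BR")
          case True then show ?thesis using BRw by blast
        next
          case False then show ?thesis using j(2) b' unfolding B1_def by blast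
        qed
      qed
      then have "\<forall>u\<in>U. om u (e - j) = 0" using om_span1[of BU "e - j"] BU(4) by blast
      then have "e - j \<in> perpS U" unfolding perp_def using om_zero_sym by blast
      moreover have "j \<in> J" unfolding J_def using j(1) span_mono[of "wf' ` B1" "rad \<union> wf' ` B1"] by blast
      ultimately show "\<exists>w w'. e = w + w' \<and> w \<in> J \<and> w' \<in> perpS U"
        by (intro exI[of _ j] exI[of _ "e - j"]) simp
    qed
  qed
  have sW1: "subspace (g1 ` W)" and iW1: "iso (g1 ` W)" using isoG_image[OF g1(1) sW iW] by blast+
  have dW1: "dim (g1 ` W) = dim W'" using dim_img[OF isoG_parts(1,2)[OF g1(1)]] d by simp
  obtain g2 where g2: "isoG g2" "\<forall>u\<in>U. g2 u = u" "g2 ` (g1 ` W) = W'"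
    using GW[OF sU iU sJ RJ JU sW' iW' JW' sW1 iW1 JW1 dW1] by blast
  have "isoG (g2 \<circ> g1)" by (rule isoG_comp[OF g1(1) g2(1)])
  then have "(g2 \<circ> g1) \<in> fix_grp s \<sigma> \<epsilon> \<Lambda> q U"
    unfolding fix_grp_def using isoG_isom g1(2) g2(2) by simp
  moreover have "(g2 \<circ> g1) ` W = W'" using g2(3) by (simp add: image_comp)
  ultimately show "\<exists>g\<in>fix_grp s \<sigma> \<epsilon> \<Lambda> q U. g ` W = W'" by blast
qed

end

context finite_dimensional_vector_space begin

lemma side_basis:
  assumes sV0: "subspace V0" and sW: "subspace W" and WV: "sum_space W V0 = UNIV"
  shows "\<exists>C B0 D. finite C \<and> finite B0 \<and> finite D \<and> independent (C \<union> B0 \<union> D) \<and> span (C \<union> B0 \<union> D) = UNIV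
    \<and> C \<inter> B0 = {} \<and> C \<inter> D = {} \<and> B0 \<inter> D = {} \<and> B0 \<subseteq> W \<inter> V0 \<and> C \<subseteq> W \<and> D \<subseteq> V0
    \<and> span (C \<union> B0) = W \<and> W \<inter> V0 \<subseteq> span B0 \<and> V0 \<subseteq> span (B0 \<union> D)
    \<and> card C + card B0 = dim W \<and> card C + card B0 + card D = dimension \<and> card B0 + card D = dim V0"
proof -
  obtain B0 where B0: "B0 \<subseteq> W \<inter> V0" "independent B0" "W \<inter> V0 \<subseteq> span B0" "card B0 = dim (W \<inter> V0)"
    by (rule basis_exists)
  obtain B where B: "B0 \<subseteq> B" "B \<subseteq> W" "independent B" "W \<subseteq> span B"
    using maximal_independent_subset_extend[of B0 W] B0(1,2) by blast
  obtain BB where BB: "B \<subseteq> BB" "BB \<subseteq> B \<union> V0" "independent BB" "B \<union> V0 \<subseteq> span BB"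
    using maximal_independent_subset_extend[of B "B \<union> V0"] B(3) by blast
  define C where "C = B - B0"
  define D where "D = BB - B"
  have finBB: "finite BB" using finiteI_independent[OF BB(3)] .
  have eBB: "BB = C \<union> B0 \<union> D" unfolding C_def D_def using B(1) BB(1) by blast
  have eB: "B = C \<union> B0" unfolding C_def using B(1) by blast
  have fin: "finite C" "finite B0" "finite D" using finBB eBB by auto
  have spBB: "span BB = UNIV"
  proof -
    have "v \<in> span BB" for v
    proof -
      obtain w v0 where "v = w + v0" "w \<in> W" "v0 \<in> V0" using WV unfolding sum_space_def by blast
      moreover have "w \<in> span BB" using \<open>w \<in> W\<close> B(4) span_mono[OF BB(1)] by blast
      moreover have "v0 \<in> span BB" using \<open>v0 \<in> V0\<close> BB(4) by blast
      ultimately show ?thesis using span_add by blast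
    qed
    then show ?thesis by blast
  qed
  have spB: "span B = W" using B(2,4) sW span_minimal by (metis span_subspace)
  have DV: "D \<subseteq> V0" unfolding D_def using BB(2) by blast
  have V0sp: "V0 \<subseteq> span (B0 \<union> D)"
  proof
    fix v0 assume v0: "v0 \<in> V0"
    have "v0 \<in> span (C \<union> (B0 \<union> D))" using spBB eBB by (simp add: Un_assoc)
    then obtain cp xp where cx: "v0 = cp + xp" "cp \<in> span C" "xp \<in> span (B0 \<union> D)" unfolding span_Un by blast
    have xpV: "xp \<in> V0" using cx(3) B0(1) DV sV0 span_minimal[of "B0 \<union> D" V0] by blast
    have "cp \<in> W" using cx(2) spB eB span_mono[of C B] by blast
    moreover have "cp \<in> V0" using cx(1) v0 xpV sV0 subspace_diff[of V0 v0 xp] by simp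
    ultimately have "cp \<in> span B0" using B0(3) by blast
    then have "cp \<in> span (B0 \<union> D)" using span_mono[of B0 "B0 \<union> D"] by blast
    then show "v0 \<in> span (B0 \<union> D)" using cx(1,3) span_add by blast
  qed
  have fB: "finite B" using finBB BB(1) finite_subset by blast
  have cBc: "card B = card C + card B0"
  proof -
    have e: "(B - B0) \<union> B0 = B" using B(1) by blast
    have "card ((B - B0) \<union> B0) = card (B - B0) + card B0"
      by (rule card_Un_disjoint) (use fB fin in auto)
    then show ?thesis unfolding C_def e .
  qed
  have cB: "card C + card B0 = dim W"
    using basis_card_eq_dim[OF B(2,4,3)] cBc by simp
  have cBB: "card C + card B0 + card D = dimension"
  proof -
    have "card BB = dim UNIV" using basis_card_eq_dim[of BB UNIV] BB(3) spBB by simp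
    then have c1: "card BB = dimension" by (simp add: dimension_def)
    have e: "B \<union> D = BB" unfolding D_def using BB(1) by blast
    have "card (B \<union> D) = card B + card D"
      by (rule card_Un_disjoint) (use fB fin in \<open>auto simp: D_def\<close>)
    then show ?thesis using c1 cBc unfolding e by simp
  qed
  have cV0: "card B0 + card D = dim V0"
  proof -
    have "B0 \<union> D \<subseteq> V0" using B0(1) DV by blast
    moreover have "independent (B0 \<union> D)" using BB(3) eBB dependent_mono[of "B0 \<union> D" BB] by blast
    ultimately have "card (B0 \<union> D) = dim V0" using basis_card_eq_dim V0sp by blast
    moreover have "card (B0 \<union> D) = card B0 + card D"
      by (rule card_Un_disjoint) (use fin B(1) in \<open>auto simp: D_def\<close>)
    ultimately show ?thesis by simp
  qed
  show ?thesis
    apply (rule exI[of _ C], rule exI[of _ B0], rule exI[of _ D])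
    using fin BB(3) spBB eBB B0 B(1,2) spB eB DV V0sp cB cBB cV0 unfolding C_def D_def by auto
qed

lemma core2:
  assumes sV0: "subspace V0" and sW: "subspace W" and WV: "sum_space W V0 = UNIV"
    and sW': "subspace W'" and WV': "sum_space W' V0 = UNIV" and d: "dim W = dim W'"
  shows "\<exists>g\<in>AT scale V0. g ` W = W'"
proof -
  obtain C B0 D where S: "finite C" "finite B0" "finite D" "independent (C \<union> B0 \<union> D)" "span (C \<union> B0 \<union> D) = UNIV"
    "C \<inter> B0 = {}" "C \<inter> D = {}" "B0 \<inter> D = {}" "B0 \<subseteq> W \<inter> V0" "C \<subseteq> W" "D \<subseteq> V0"
    "span (C \<union> B0) = W" "W \<inter> V0 \<subseteq> span B0" "V0 \<subseteq> span (B0 \<union> D)"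
    "card C + card B0 = dim W" "card C + card B0 + card D = dimension" "card B0 + card D = dim V0"
    using side_basis[OF sV0 sW WV] by blast
  obtain C' B0' D' where S': "finite C'" "finite B0'" "finite D'" "independent (C' \<union> B0' \<union> D')" "span (C' \<union> B0' \<union> D') = UNIV"
    "C' \<inter> B0' = {}" "C' \<inter> D' = {}" "B0' \<inter> D' = {}" "B0' \<subseteq> W' \<inter> V0" "C' \<subseteq> W'" "D' \<subseteq> V0"
    "span (C' \<union> B0') = W'" "W' \<inter> V0 \<subseteq> span B0'" "V0 \<subseteq> span (B0' \<union> D')"
    "card C' + card B0' = dim W'" "card C' + card B0' + card D' = dimension" "card B0' + card D' = dim V0"
    using side_basis[OF sV0 sW' WV'] by blast
  have cB0: "card B0 = card B0'" using S(15-17) S'(15-17) d by linarith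
  have cD: "card D = card D'" using S(15-17) S'(15-17) d by linarith
  obtain p0 where p0: "bij_betw p0 B0 B0'" using finite_same_card_bij[OF S(2) S'(2) cB0] by blast
  obtain pD where pD: "bij_betw pD D D'" using finite_same_card_bij[OF S(3) S'(3) cD] by blast
  have exphi: "\<exists>w'\<in>W'. c - w' \<in> V0" for c
  proof -
    obtain w' v0 where "c = w' + v0" "w' \<in> W'" "v0 \<in> V0" using WV' unfolding sum_space_def by blast
    then show ?thesis by (intro bexI[of _ w']) simp_all
  qed
  obtain phi where phi: "\<forall>c. phi c \<in> W' \<and> c - phi c \<in> V0" using exphi by metis
  define h where "h b = (if b \<in> C then phi b else if b \<in> B0 then p0 b else pD b)" for b
  define BB where "BB = C \<union> B0 \<union> D"
  interpret vp: vector_space_pair scale scale by unfold_locales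
  define g where "g = vp.construct BB h"
  have lin: "Vector_Spaces.linear scale scale g" unfolding g_def using vp.linear_construct[of BB h] S(4) unfolding BB_def by simp
  interpret lg: Vector_Spaces.linear scale scale g by (rule lin)
  have gb: "g b = h b" if "b \<in> BB" for b unfolding g_def BB_def using vp.construct_basis[OF S(4)] that BB_def by blast
  have gC: "g c = phi c" if "c \<in> C" for c using gb[of c] that unfolding h_def BB_def by simp
  have gB0: "g b = p0 b" if "b \<in> B0" for b using gb[of b] that S(6) unfolding h_def BB_def by auto
  have gD: "g b = pD b" if "b \<in> D" for b using gb[of b] that S(7,8) unfolding h_def BB_def by auto
  have diffV0: "g v - v \<in> V0" for v
  proof -
    have "v \<in> span BB" using S(5) unfolding BB_def by simp
    then show ?thesis
    proof (induct rule: span_induct)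
      case base
      show ?case unfolding subspace_def
      proof (intro conjI ballI allI)
        show "0 \<in> {v. g v - v \<in> V0}" using subspace_0[OF sV0] by (simp add: lg.zero)
      next
        fix x y assume x: "x \<in> {v. g v - v \<in> V0}" and y: "y \<in> {v. g v - v \<in> V0}"
        have e: "g (x + y) - (x + y) = (g x - x) + (g y - y)" by (simp add: lg.add algebra_simps)
        show "x + y \<in> {v. g v - v \<in> V0}" unfolding mem_Collect_eq e
          by (rule subspace_add[OF sV0]) (use x y in simp)+
      next
        fix c x assume x: "x \<in> {v. g v - v \<in> V0}"
        have e: "g (scale c x) - scale c x = scale c (g x - x)" by (simp add: lg.scale scale_right_diff_distrib)
        show "scale c x \<in> {v. g v - v \<in> V0}" unfolding mem_Collect_eq e
          by (rule subspace_scale[OF sV0]) (use x in simp)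
      qed
    next
      case (step b)
      then consider "b \<in> C" | "b \<in> B0" | "b \<in> D" unfolding BB_def by blast
      then show ?case
      proof cases
        case 1
        then have "b - phi b \<in> V0" using phi by blast
        then have "- (b - phi b) \<in> V0" using subspace_neg[OF sV0] by blast
        then show ?thesis using gC[OF 1] by simp
      next
        case 2
        then have "p0 b \<in> V0" "b \<in> V0" using p0 S(9) S'(9) bij_betwE by blast+
        then show ?thesis using gB0[OF 2] subspace_diff[OF sV0] by simp
      next
        case 3
        then have "pD b \<in> V0" "b \<in> V0" using pD S(11) S'(11) bij_betwE by blast+
        then show ?thesis using gD[OF 3] subspace_diff[OF sV0] by simp
      qed
    qed
  qed
  have imgCB0: "g ` (C \<union> B0) = phi ` C \<union> B0'"
  proof -
    have "g ` B0 = p0 ` B0" using gB0 by (rule image_cong[OF refl])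
    then have i1: "g ` B0 = B0'" using bij_betw_imp_surj_on[OF p0] by simp
    have i2: "g ` C = phi ` C" using gC by (rule image_cong[OF refl])
    show ?thesis using i1 i2 by (simp add: image_Un)
  qed
  have W'sp: "W' \<subseteq> span (phi ` C \<union> B0')"
  proof
    fix w' assume w': "w' \<in> W'"
    have "w' \<in> span (C \<union> (B0 \<union> D))" using S(5) by (simp add: Un_assoc)
    then obtain cp xp where cx: "w' = cp + xp" "cp \<in> span C" "xp \<in> span (B0 \<union> D)" unfolding span_Un by blast
    have xpV: "xp \<in> V0" using cx(3) S(9,11) sV0 span_minimal[of "B0 \<union> D" V0] by blast
    have "g cp \<in> g ` span C" using cx(2) by blast
    also have "g ` span C = span (g ` C)" using lg.span_image by simp
    also have "g ` C = phi ` C" using gC by auto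
    finally have gcp: "g cp \<in> span (phi ` C)" .
    have pC: "phi ` C \<subseteq> W'" using phi by auto
    have "span (phi ` C) \<subseteq> W'" using pC sW' by (rule span_minimal)
    then have gcpW: "g cp \<in> W'" using gcp by blast
    have e: "w' - g cp = xp + (- (g cp - cp))" using cx(1) by (simp add: algebra_simps)
    have "- (g cp - cp) \<in> V0" using diffV0 subspace_neg[OF sV0] by blast
    then have "xp + (- (g cp - cp)) \<in> V0" by (rule subspace_add[OF sV0 xpV])
    then have "w' - g cp \<in> V0" unfolding e .
    moreover have "w' - g cp \<in> W'" using w' gcpW subspace_diff[OF sW'] by blast
    ultimately have "w' - g cp \<in> span B0'" using S'(13) by blast
    then have "w' - g cp \<in> span (phi ` C \<union> B0')" using span_mono[of B0' "phi ` C \<union> B0'"] by blast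
    moreover have "g cp \<in> span (phi ` C \<union> B0')" using gcp span_mono[of "phi ` C" "phi ` C \<union> B0'"] by blast
    ultimately have "(w' - g cp) + g cp \<in> span (phi ` C \<union> B0')" using span_add by blast
    then show "w' \<in> span (phi ` C \<union> B0')" by simp
  qed
  have gW: "g ` W = W'"
  proof -
    have "g ` W = g ` span (C \<union> B0)" by (simp only: S(12))
    also have "\<dots> = span (g ` (C \<union> B0))" by (rule sym, rule lg.span_image)
    also have "\<dots> = span (phi ` C \<union> B0')" using imgCB0 by simp
    finally have e: "g ` W = span (phi ` C \<union> B0')" .
    have pC: "phi ` C \<subseteq> W'" using phi by auto
    have "phi ` C \<union> B0' \<subseteq> W'" using pC S'(9) by auto
    then have "span (phi ` C \<union> B0') \<subseteq> W'" using sW' by (rule span_minimal)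
    then show ?thesis using e W'sp by blast
  qed
  have surj: "surj g"
  proof -
    have "UNIV \<subseteq> span (g ` BB)"
    proof
      fix v :: 'b
      obtain w' v0 where wv: "v = w' + v0" "w' \<in> W'" "v0 \<in> V0" using WV' unfolding sum_space_def by blast
      have "w' \<in> g ` W" using gW wv(2) by blast
      moreover have "g ` W \<subseteq> g ` span BB" using S(5) unfolding BB_def by blast
      ultimately have "w' \<in> g ` span BB" by blast
      then have a: "w' \<in> span (g ` BB)" using lg.span_image[of BB] by simp
      have "g ` B0 = p0 ` B0" using gB0 by (rule image_cong[OF refl])
      then have i1: "g ` B0 = B0'" using bij_betw_imp_surj_on[OF p0] by simp
      have "g ` D = pD ` D" using gD by (rule image_cong[OF refl])
      then have i2: "g ` D = D'" using bij_betw_imp_surj_on[OF pD] by simp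
      have "g ` (B0 \<union> D) = B0' \<union> D'" using i1 i2 by (simp add: image_Un)
      then have "span (B0' \<union> D') \<subseteq> span (g ` BB)" unfolding BB_def by (intro span_mono) auto
      then have b: "v0 \<in> span (g ` BB)" using wv(3) S'(14) by blast
      show "v \<in> span (g ` BB)" using a b wv(1) span_add by blast
    qed
    moreover have "span (g ` BB) = g ` span BB" using lg.span_image[of BB] by simp
    ultimately have "UNIV \<subseteq> range g" by blast
    then show ?thesis by blast
  qed
  have inj: "inj g" by (rule linear_surj_imp_inj[OF lin surj])
  have "g \<in> AT scale V0" unfolding AT_def GLgrp_def using lin inj surj diffV0 by (simp add: bij_def)
  then show ?thesis using gW by blast
qed

end

context finite_dimensional_vector_space begin

lemma part2: "subspace V0 \<Longrightarrow> transitive_on_dims scale (AT scale V0) (PVrel scale V0)"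
  unfolding transitive_on_dims_def PVrel_def using core2 by blast

lemma part1: "transitive_on_dims scale (GLgrp scale) (PV scale)"
  unfolding transitive_on_dims_def
proof (intro ballI impI)
  fix W W' assume W: "W \<in> PV scale" and W': "W' \<in> PV scale" and d: "dim W = dim W'"
  have sW: "subspace W" and sW': "subspace W'" using W W' unfolding PV_def by blast+
  have e: "sum_space X UNIV = UNIV" if "subspace X" for X
  proof -
    have "x \<in> {w + w' |w w'. w \<in> X \<and> w' \<in> UNIV}" for x
      using subspace_0[OF that] by (intro CollectI exI[of _ 0] exI[of _ x]) simp
    then show ?thesis unfolding sum_space_def by blast
  qed
  obtain g where "g \<in> AT scale UNIV" "g ` W = W'" using core2[OF subspace_UNIV sW e[OF sW] sW' e[OF sW'] d] by blast
  then show "\<exists>g\<in>GLgrp scale. g ` W = W'" unfolding AT_def by blast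
qed

end

lemma fd_exists:
  assumes "vector_space s" "fin_dim s"
  shows "\<exists>B. finite_dimensional_vector_space s B"
proof -
  interpret vector_space s by fact
  obtain B where B: "finite B" "span B = UNIV" using assms(2) unfolding fin_dim_def by blast
  obtain B' where B': "B' \<subseteq> B" "independent B'" "B \<subseteq> span B'" by (rule maximal_independent_subset[of B])
  have "span B' = UNIV" using B(2) B'(3) span_mono span_span by (metis top.extremum_uniqueI)
  moreover have "finite B'" using B(1) B'(1) finite_subset by blast
  ultimately have "finite_dimensional_vector_space s B'" using B'(2) by unfold_locales
  then show ?thesis by blast
qed

theorem proposition5p4:
  fixes sV :: "'k::field \<Rightarrow> 'v::ab_group_add \<Rightarrow> 'v"
    and V0 :: "'v set"
    and sE :: "'k \<Rightarrow> 'e::ab_group_add \<Rightarrow> 'e"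
    and \<sigma> :: "'k \<Rightarrow> 'k" and \<epsilon> :: 'k and \<Lambda> :: "'k set"
    and q :: "'e \<Rightarrow> 'e \<Rightarrow> 'k"
    and U :: "'e set"
  assumes "vector_space sV" and "fin_dim sV" and "module.subspace sV V0"
    and "vector_space sE" and "fin_dim sE"
    and "form_param \<sigma> \<epsilon> \<Lambda>" and "sesquilinear sE \<sigma> q"
    and "U \<in> Pom sE \<sigma> \<epsilon> \<Lambda> q"
  shows "transitive_on_dims sV (GLgrp sV) (PV sV)
    \<and> transitive_on_dims sV (AT sV V0) (PVrel sV V0)
    \<and> transitive_on_dims sE (isom_grp sE \<sigma> \<epsilon> \<Lambda> q) (Pom sE \<sigma> \<epsilon> \<Lambda> q)
    \<and> transitive_on_dims sE (fix_grp sE \<sigma> \<epsilon> \<Lambda> q U) (Pom_rel sE \<sigma> \<epsilon> \<Lambda> q U)"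
proof -
  obtain BV where "finite_dimensional_vector_space sV BV" using fd_exists[OF assms(1,2)] by blast
  then interpret V: finite_dimensional_vector_space sV BV .
  obtain BE where "finite_dimensional_vector_space sE BE" using fd_exists[OF assms(4,5)] by blast
  then interpret E: finite_dimensional_vector_space sE BE .
  interpret F: fspace sE BE \<sigma> \<epsilon> \<Lambda> q by unfold_locales (fact assms(6), fact assms(7))
  show ?thesis using V.part1 V.part2[OF assms(3)] F.part3 F.part4[OF assms(8)] by blast
qed


end
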